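(* Let $\rho,\sigma,\tau,\rho_1,\rho_2,\sigma_1,\sigma_2$ be density operators on a finite-dimensional Hilbert space (with $\tau$ possibly on another finite-dimensional space in (ii)). Then: (i) $J_{\alpha,\beta}(\rho,\sigma)\ge 0$ whenever $\alpha\in(0,1),\beta\in(-\infty,0)\cup(0,1)$, or $\alpha\in(1,\infty),\beta\in[1,\infty)$; moreover for $\alpha\in(1,\infty),\beta\in[1,\infty)$, $J_{\alpha,\beta}(\rho,\sigma)\le \frac{1}{(1-\alpha)\beta}\big(2^{1-\alpha\beta}-1\big)$. (ii) For $\alpha\in(0,1)\cup(1,\infty),\beta\in(-\infty,0)\cup(0,\infty)$: $J_{\alpha,\beta}(\rho\otimes\tau,\sigma\otimes\tau)=\big[1+(1-\alpha)\beta S_{\alpha,\beta}(\tau)\big]J_{\alpha,\beta}(\rho,\sigma)$; in particular, if $\tau$ is pure then $J_{\alpha,\beta}(\rho\otimes\tau,\sigma\otimes\tau)=J_{\alpha,\beta}(\rho,\sigma)$. (iii) For $\alpha\in(0,1)\cup(1,\infty),\beta\in(-\infty,0)\cup(0,\infty)$ and any unitary $U$: $J_{\alpha,\beta}(U\rho U^\dagger,U\sigma U^\dagger)=J_{\alpha,\beta}(\rho,\sigma)$. (iv) For $\alpha\in(0,1)\cup(1,\infty),\beta\in(-\infty,0)\cup(0,\infty)$: $J_{\alpha,\beta}(\rho,\sigma)=J_{\alpha,\beta}(\sigma,\rho)$. (v) For $\alpha\in(1,\infty),\beta\in[1,\infty)$: $|J_{\alpha,\beta}(\rho_1,\sigma)-J_{\alpha,\beta}(\rho_2,\sigma)|\le\frac{\alpha}{\alpha-1}\|\rho_1-\rho_2\|_1$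 and $|J_{\alpha,\beta}(\rho,\sigma_1)-J_{\alpha,\beta}(\rho,\sigma_2)|\le\frac{\alpha}{\alpha-1}\|\sigma_1-\sigma_2\|_1$.
   Context: For a density operator $\rho$, $\alpha\in(0,1)\cup(1,\infty)$, $\beta\in(-\infty,0)\cup(0,\infty)$, the quantum $(\alpha,\beta)$ entropy is $S_{\alpha,\beta}(\rho)=\frac{1}{(1-\alpha)\beta}\big[(\mathrm{Tr}\,\rho^{\alpha})^{\beta}-1\big]$. The quantum $(\alpha,\beta)$ Jensen–Shannon divergence is $J_{\alpha,\beta}(\rho,\sigma)=S_{\alpha,\beta}\big(\tfrac{\rho+\sigma}{2}\big)-\tfrac12 S_{\alpha,\beta}(\rho)-\tfrac12 S_{\alpha,\beta}(\sigma)$. The trace distance is normalized as $\|A\|_1=\tfrac12\mathrm{Tr}|A|$. *)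

theory Defs
  imports Complex_Main "Jordan_Normal_Form.Matrix"
begin

definition mtrace :: "complex mat \<Rightarrow> complex" where
  "mtrace A = (\<Sum>i<dim_row A. A $$ (i,i))"

definition adj :: "complex mat \<Rightarrow> complex mat" where
  "adj A = transpose_mat (map_mat cnj A)"

definition unitary :: "nat \<Rightarrow> complex mat \<Rightarrow> bool" where
  "unitary n U \<longleftrightarrow> U \<in> carrier_mat n n \<and> U * adj U = 1\<^sub>m n \<and> adj U * U = 1\<^sub>m n"

definition density :: "nat \<Rightarrow> complex mat \<Rightarrow> bool" where
  "density n \<rho> \<longleftrightarrow> \<rho> \<in> carrier_mat n n \<and> adj \<rho> = \<rho> \<and>
     (\<forall>v \<in> carrier_vec n. 0 \<le> Re (scalar_prod (map_vec cnj v) (\<rho> *\<^sub>v v))) \<and>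
     mtrace \<rho> = 1"

definition pure_state :: "nat \<Rightarrow> complex mat \<Rightarrow> bool" where
  "pure_state n \<tau> \<longleftrightarrow> (\<exists>v \<in> carrier_vec n. scalar_prod (map_vec cnj v) v = 1 \<and>
     \<tau> = mat n n (\<lambda>(i,j). v $ i * cnj (v $ j)))"

definition real_diag :: "nat \<Rightarrow> (nat \<Rightarrow> real) \<Rightarrow> complex mat" where
  "real_diag n d = mat n n (\<lambda>(i,j). if i = j then complex_of_real (d i) else 0)"

definition mat_fun :: "(real \<Rightarrow> real) \<Rightarrow> complex mat \<Rightarrow> complex mat" where
  "mat_fun f A = (SOME B. \<exists>U d. unitary (dim_row A) U \<and>
      A = U * real_diag (dim_row A) d * adj U \<and>
      B = U * real_diag (dim_row A) (f \<circ> d) * adj U)"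

definition tr_pow :: "complex mat \<Rightarrow> real \<Rightarrow> real" where
  "tr_pow \<rho> \<alpha> = Re (mtrace (mat_fun (\<lambda>x. x powr \<alpha>) \<rho>))"

definition trace_norm :: "complex mat \<Rightarrow> real" where
  "trace_norm A = (1/2) * Re (mtrace (mat_fun sqrt (adj A * A)))"

definition kron :: "complex mat \<Rightarrow> complex mat \<Rightarrow> complex mat" where
  "kron A B = mat (dim_row A * dim_row B) (dim_col A * dim_col B)
     (\<lambda>(i,j). A $$ (i div dim_row B, j div dim_col B) * B $$ (i mod dim_row B, j mod dim_col B))"

definition S_ab :: "real \<Rightarrow> real \<Rightarrow> complex mat \<Rightarrow> real" where
  "S_ab \<alpha> \<beta> \<rho> = 1 / ((1 - \<alpha>) * \<beta>) * ((tr_pow \<rho> \<alpha>) powr \<beta> - 1)"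

definition J_ab :: "real \<Rightarrow> real \<Rightarrow> complex mat \<Rightarrow> complex mat \<Rightarrow> real" where
  "J_ab \<alpha> \<beta> \<rho> \<sigma> = S_ab \<alpha> \<beta> ((1/2) \<cdot>\<^sub>m (\<rho> + \<sigma>)) - S_ab \<alpha> \<beta> \<rho> / 2 - S_ab \<alpha> \<beta> \<sigma> / 2"

end

theory Submission
  imports Defs "Jordan_Normal_Form.Schur_Decomposition" "HOL-Analysis.Convex"
begin


lemma adj_carrier[simp]: "A \<in> carrier_mat n m \<Longrightarrow> adj A \<in> carrier_mat m n"
  unfolding adj_def by auto

lemma adj_dims[simp]: "dim_row (adj A) = dim_col A" "dim_col (adj A) = dim_row A"
  unfolding adj_def by auto

lemma adj_index[simp]: "i < dim_col A \<Longrightarrow> j < dim_row A \<Longrightarrow> adj A $$ (i,j) = cnj (A $$ (j,i))"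
  unfolding adj_def by auto

lemma adj_adj[simp]: "adj (adj A) = A"
  by (rule eq_matI, auto)

lemma adj_mult: assumes "A \<in> carrier_mat n k" "B \<in> carrier_mat k m"
  shows "adj (A * B) = adj B * adj A"
proof (rule eq_matI)
  fix i j assume "i < dim_row (adj B * adj A)" "j < dim_col (adj B * adj A)"
  with assms have i: "i < m" and j: "j < n" by auto
  have "adj (A * B) $$ (i,j) = cnj (\<Sum>l<k. A $$ (j,l) * B $$ (l,i))"
    using assms i j by (simp add: index_mult_mat scalar_prod_def row_def col_def sum.atLeast0_lessThan_Suc lessThan_atLeast0)
  also have "\<dots> = (\<Sum>l<k. cnj (B $$ (l,i)) * cnj (A $$ (j,l)))"
    by (simp add: mult.commute)
  also have "\<dots> = (adj B * adj A) $$ (i,j)"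
    using assms i j by (simp add: index_mult_mat scalar_prod_def row_def col_def lessThan_atLeast0)
  finally show "adj (A * B) $$ (i,j) = (adj B * adj A) $$ (i,j)" .
qed (insert assms, auto)

lemma adj_mult': "dim_col A = dim_row B \<Longrightarrow> adj (A * B) = adj B * adj A"
  by (rule adj_mult[of _ "dim_row A" "dim_col A" _ "dim_col B"], auto)

lemma adj_one[simp]: "adj (1\<^sub>m n) = 1\<^sub>m n"
  by (rule eq_matI, auto)

lemma adj_zero[simp]: "adj (0\<^sub>m n m) = 0\<^sub>m m n"
  by (rule eq_matI, auto)

lemma adj_add: assumes "A \<in> carrier_mat n m" "B \<in> carrier_mat n m"
  shows "adj (A + B) = adj A + adj B"
  by (rule eq_matI, insert assms, auto)

lemma adj_minus: assumes "A \<in> carrier_mat n m" "B \<in> carrier_mat n m"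
  shows "adj (A - B) = adj A - adj B"
  by (rule eq_matI, insert assms, auto)

lemma adj_smult: "adj (c \<cdot>\<^sub>m A) = cnj c \<cdot>\<^sub>m adj A"
  by (rule eq_matI, auto)

lemma adj_real_diag[simp]: "adj (real_diag n d) = real_diag n d"
  unfolding real_diag_def by (rule eq_matI, auto)

lemma real_diag_carrier[simp]: "real_diag n d \<in> carrier_mat n n"
  unfolding real_diag_def by auto

lemma real_diag_dims[simp]: "dim_row (real_diag n d) = n" "dim_col (real_diag n d) = n"
  unfolding real_diag_def by auto

lemma real_diag_index[simp]: "i < n \<Longrightarrow> j < n \<Longrightarrow> real_diag n d $$ (i,j) = (if i = j then complex_of_real (d i) else 0)"
  unfolding real_diag_def by auto

lemma unitaryD: assumes "unitary n U"
  shows "U \<in> carrier_mat n n" "adj U \<in> carrier_mat n n" "U * adj U = 1\<^sub>m n" "adj U * U = 1\<^sub>m n"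
  using assms unfolding unitary_def by auto

lemma unitaryI: assumes "U \<in> carrier_mat n n" "adj U * U = 1\<^sub>m n"
  shows "unitary n U"
  unfolding unitary_def using assms mat_mult_left_right_inverse[of "adj U" n U] by auto

lemma mat_assoc: "dim_col A = dim_row B \<Longrightarrow> dim_col B = dim_row C \<Longrightarrow> A * B * C = A * (B * C)"
  by (rule assoc_mult_mat[of _ "dim_row A" "dim_col A" _ "dim_col B" _ "dim_col C"], auto)

lemma unitary_dims: "unitary n U \<Longrightarrow> dim_row U = n \<and> dim_col U = n"
  unfolding unitary_def by auto

lemma unitary_cancel: assumes "unitary n U" "dim_row X = n"
  shows "U * (adj U * X) = X" "adj U * (U * X) = X"
proof -
  note u = unitaryD[OF assms(1)]
  from assms(2) have X: "X \<in> carrier_mat n (dim_col X)" by auto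
  note assms = assms(1) X
  have "U * (adj U * X) = (U * adj U) * X" using u assms(2) by (metis assoc_mult_mat)
  thus "U * (adj U * X) = X" using u assms(2) by simp
  have "adj U * (U * X) = (adj U * U) * X" using u assms(2) by (metis assoc_mult_mat)
  thus "adj U * (U * X) = X" using u assms(2) by simp
qed

lemma unitary_one: "unitary n (1\<^sub>m n)"
  by (rule unitaryI, auto)

lemma unitary_adj: "unitary n U \<Longrightarrow> unitary n (adj U)"
  unfolding unitary_def by auto

lemma unitary_mult: assumes "unitary n U" "unitary n V" shows "unitary n (U * V)"
proof (rule unitaryI)
  note u = unitaryD[OF assms(1)] and v = unitaryD[OF assms(2)]
  show "U * V \<in> carrier_mat n n" using u v by auto
  have "adj (U * V) * (U * V) = adj V * adj U * (U * V)"
    using u v by (simp add: adj_mult[of _ n n])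
  also have "\<dots> = adj V * (adj U * (U * V))"
    using u v by (meson assoc_mult_mat mult_carrier_mat)
  also have "adj U * (U * V) = (adj U * U) * V"
    using u v by (metis assoc_mult_mat)
  also have "\<dots> = V" using u v by simp
  also have "adj V * V = 1\<^sub>m n" using v by simp
  finally show "adj (U * V) * (U * V) = 1\<^sub>m n" .
qed

lemma mult_index_sum: assumes "A \<in> carrier_mat n k" "B \<in> carrier_mat k m" "i < n" "j < m"
  shows "(A * B) $$ (i,j) = (\<Sum>l<k. A $$ (i,l) * B $$ (l,j))"
  using assms by (simp add: index_mult_mat scalar_prod_def row_def col_def lessThan_atLeast0)

lemma cscalar_self: "w \<bullet>c w = complex_of_real (\<Sum>k<dim_vec w. (cmod (w $ k))\<^sup>2)"
proof -
  have "w \<bullet>c w = (\<Sum>k<dim_vec w. w $ k * cnj (w $ k))"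
    by (simp add: scalar_prod_def lessThan_atLeast0)
  also have "\<dots> = (\<Sum>k<dim_vec w. complex_of_real ((cmod (w $ k))\<^sup>2))"
    by (rule sum.cong, auto simp: complex_norm_square[symmetric])
  finally show ?thesis by simp
qed

lemma eigen_exists: assumes A: "(A :: complex mat) \<in> carrier_mat n n" and n: "n > 0"
  shows "\<exists>e v. v \<in> carrier_vec n \<and> v \<noteq> 0\<^sub>v n \<and> A *\<^sub>v v = e \<cdot>\<^sub>v v"
proof -
  from char_poly_factorized[OF A] obtain as where cp: "char_poly A = (\<Prod>a\<leftarrow>as. [:- a, 1:])"
    and len: "length as = n" by auto
  from len n obtain a as' where as: "as = a # as'" by (cases as, auto)
  have "poly (char_poly A) a = 0" unfolding cp as by simp
  hence "eigenvalue A a" using eigenvalue_root_char_poly[OF A] by simp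
  then obtain v where "eigenvector A v a" unfolding eigenvalue_def by auto
  thus ?thesis unfolding eigenvector_def using A by auto
qed

lemma orthonormal_extension: assumes v: "v \<in> carrier_vec n" and v0: "v \<noteq> 0\<^sub>v n"
  shows "\<exists>W c. unitary n W \<and> col W 0 = c \<cdot>\<^sub>v v"
proof -
  interpret cof_vec_space n "TYPE(complex)" .
  define b where "b = basis_completion v"
  from basis_completion[OF v v0, folded b_def]
  have dist_b: "distinct b" and indep: "\<not> lin_dep (set b)" and b: "set b \<subseteq> carrier_vec n" and hdb: "hd b = v"
    and len_b: "length b = n" by auto
  from v0 v have n: "n > 0" by (cases n, auto)
  from hdb len_b n obtain vs where bv: "b = v # vs" by (cases b, auto)
  define ws where "ws = gram_schmidt n b"
  from gram_schmidt_result[OF b dist_b indep refl, folded ws_def]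
  have ws: "set ws \<subseteq> carrier_vec n" "corthogonal ws" "length ws = n"
    by (auto simp: len_b)
  from gram_schmidt_hd[OF v, of vs, folded bv] have hdws: "hd ws = v" unfolding ws_def .
  hence ws0: "ws ! 0 = v" using ws(3) n by (cases ws, auto)
  define N where "N = (\<lambda>i. sqrt (\<Sum>k<n. (cmod (ws ! i $ k))\<^sup>2))"
  define us where "us = map (\<lambda>i. complex_of_real (1 / N i) \<cdot>\<^sub>v ws ! i) [0..<n]"
  have wsi: "i < n \<Longrightarrow> ws ! i \<in> carrier_vec n" for i using ws by auto
  have selfw: "i < n \<Longrightarrow> ws ! i \<bullet>c ws ! i = complex_of_real ((N i)\<^sup>2)" for i
    unfolding N_def using cscalar_self[of "ws ! i"] wsi[of i] by (simp add: sum_nonneg)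
  have Npos: "i < n \<Longrightarrow> N i > 0" for i
  proof -
    assume i: "i < n"
    from corthogonalD[OF ws(2), of i i] i ws(3) have "ws ! i \<bullet>c ws ! i \<noteq> 0" by auto
    with selfw[OF i] have "N i \<noteq> 0" by auto
    moreover have "N i \<ge> 0" unfolding N_def by (simp add: sum_nonneg)
    ultimately show ?thesis by auto
  qed
  have us_len: "length us = n" unfolding us_def by simp
  have usi: "i < n \<Longrightarrow> us ! i = complex_of_real (1 / N i) \<cdot>\<^sub>v ws ! i" for i unfolding us_def by simp
  have us_carr: "set us \<subseteq> carrier_vec n" unfolding us_def using wsi by auto
  define W where "W = mat_of_cols n us"
  have W: "W \<in> carrier_mat n n" unfolding W_def using us_len by auto
  have Wij: "i < n \<Longrightarrow> j < n \<Longrightarrow> W $$ (i,j) = us ! j $ i" for i j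
    unfolding W_def using mat_of_cols_index us_len by auto
  have orth: "i < n \<Longrightarrow> j < n \<Longrightarrow> us ! j \<bullet>c us ! i = (if i = j then 1 else 0)" for i j
  proof -
    assume i: "i < n" and j: "j < n"
    have "us ! j \<bullet>c us ! i = complex_of_real (1 / N j) * complex_of_real (1 / N i) * (ws ! j \<bullet>c ws ! i)"
      unfolding usi[OF i] usi[OF j] using wsi[OF i] wsi[OF j]
      by (simp add: conjugate_smult_vec scalar_prod_smult_distrib smult_scalar_prod_distrib)
    also have "\<dots> = (if i = j then 1 else 0)"
    proof (cases "i = j")
      case True
      thus ?thesis using selfw[OF i] Npos[OF i] by (simp add: power2_eq_square)
    next
      case False
      thus ?thesis using corthogonalD[OF ws(2), of j i] i j ws(3) by auto
    qed
    finally show ?thesis .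
  qed
  have "adj W * W = 1\<^sub>m n"
  proof (rule eq_matI)
    fix i j assume "i < dim_row (1\<^sub>m n)" "j < dim_col (1\<^sub>m n)"
    hence i: "i < n" and j: "j < n" by auto
    have di: "dim_vec (us ! i) = n" "dim_vec (us ! j) = n"
      using usi[OF i] usi[OF j] wsi[OF i] wsi[OF j] by auto
    have "(adj W * W) $$ (i,j) = (\<Sum>l<n. cnj (us ! i $ l) * us ! j $ l)"
      by (subst mult_index_sum[of _ n n _ n], insert W i j, auto simp: Wij)
    also have "\<dots> = us ! j \<bullet>c us ! i"
      using di by (auto simp: scalar_prod_def lessThan_atLeast0 mult.commute intro!: sum.cong)
    finally show "(adj W * W) $$ (i,j) = 1\<^sub>m n $$ (i,j)" using orth[OF i j] i j by auto
  qed (insert W, auto)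
  hence uW: "unitary n W" using unitaryI W by auto
  have "col W 0 = us ! 0" unfolding W_def using col_mat_of_cols[of 0 us n] n us_len usi[OF n] wsi[OF n] by auto
  also have "\<dots> = complex_of_real (1 / N 0) \<cdot>\<^sub>v v" using usi[OF n] ws0 by simp
  finally show ?thesis using uW by blast
qed

lemma mat_mult_col0: assumes "A \<in> carrier_mat n n" "W \<in> carrier_mat n n" "l < n" "0 < n"
  shows "(A * W) $$ (l, 0) = (A *\<^sub>v col W 0) $ l"
  using assms by (simp add: index_mult_mat mult_mat_vec_def)

theorem spectral: "A \<in> carrier_mat n n \<Longrightarrow> adj A = A \<Longrightarrow> \<exists>U d. unitary n U \<and> A = U * real_diag n d * adj U"
proof (induction n arbitrary: A)
  case 0
  show ?case
    by (rule exI[of _ "1\<^sub>m 0"], rule exI[of _ "\<lambda>_. 0"], intro conjI unitary_one eq_matI, insert 0, auto)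
next
  case (Suc k)
  note A = Suc.prems(1) and herm = Suc.prems(2)
  let ?n = "Suc k"
  from eigen_exists[OF A] obtain e v where v: "v \<in> carrier_vec ?n" "v \<noteq> 0\<^sub>v ?n" and ev: "A *\<^sub>v v = e \<cdot>\<^sub>v v" by auto
  from orthonormal_extension[OF v] obtain W c where uW: "unitary ?n W" and cW: "col W 0 = c \<cdot>\<^sub>v v" by auto
  note W = unitaryD[OF uW]
  have Au: "A *\<^sub>v col W 0 = e \<cdot>\<^sub>v col W 0"
    unfolding cW using A v ev by (simp add: mult_mat_vec smult_smult_assoc mult.commute)
  define A' where "A' = adj W * A * W"
  have A': "A' \<in> carrier_mat ?n ?n" unfolding A'_def using W A by auto
  have hA': "adj A' = A'" unfolding A'_def using W A herm
    by (simp add: adj_mult[of _ ?n ?n _ ?n] assoc_mult_mat[of _ ?n ?n _ ?n _ ?n])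
  have col0: "i < ?n \<Longrightarrow> A' $$ (i, 0) = (if i = 0 then e else 0)" for i
  proof -
    assume i: "i < ?n"
    have AWl: "l < ?n \<Longrightarrow> (A * W) $$ (l,0) = e * W $$ (l,0)" for l
    proof -
      assume l: "l < ?n"
      have "(A * W) $$ (l,0) = (A *\<^sub>v col W 0) $ l" using mat_mult_col0[OF A W(1) l] by simp
      also have "\<dots> = e * W $$ (l,0)" unfolding Au using W l by simp
      finally show ?thesis .
    qed
    have WW: "(adj W * W) $$ (i,0) = (\<Sum>l<?n. adj W $$ (i,l) * W $$ (l,0))"
      by (rule mult_index_sum, insert W i, auto)
    have "A' $$ (i,0) = (adj W * (A * W)) $$ (i,0)" unfolding A'_def using W A
      by (simp add: assoc_mult_mat[of _ ?n ?n _ ?n _ ?n])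
    also have "\<dots> = (\<Sum>l<?n. adj W $$ (i,l) * (A * W) $$ (l,0))"
      by (rule mult_index_sum, insert W A i, auto)
    also have "\<dots> = (\<Sum>l<?n. e * (adj W $$ (i,l) * W $$ (l,0)))"
    proof (rule sum.cong[OF refl])
      fix l assume "l \<in> {..<?n}"
      hence l: "l < ?n" by simp
      show "adj W $$ (i,l) * (A * W) $$ (l,0) = e * (adj W $$ (i,l) * W $$ (l,0))"
        unfolding AWl[OF l] by simp
    qed
    also have "\<dots> = e * (\<Sum>l<?n. adj W $$ (i,l) * W $$ (l,0))"
      by (rule sum_distrib_left[symmetric])
    also have "\<dots> = e * (adj W * W) $$ (i,0)"
      unfolding WW ..
    also have "\<dots> = (if i = 0 then e else 0)" using W i by auto
    finally show ?thesis .
  qed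
  have ce: "cnj e = e"
  proof -
    have "A' $$ (0,0) = adj A' $$ (0,0)" using hA' by simp
    also have "\<dots> = cnj (A' $$ (0,0))" using A' by simp
    finally show "cnj e = e" using col0[of 0] by simp
  qed
  have e_real: "e = complex_of_real (Re e)"
  proof -
    from ce have "Im e = 0" by (simp add: complex_eq_iff)
    thus ?thesis by (simp add: complex_eq_iff)
  qed
  have row0: "j < ?n \<Longrightarrow> A' $$ (0, j) = (if j = 0 then e else 0)" for j
  proof -
    assume j: "j < ?n"
    have "A' $$ (0,j) = adj A' $$ (0,j)" using hA' by simp
    also have "\<dots> = cnj (A' $$ (j,0))" using A' j by simp
    also have "\<dots> = cnj (if j = 0 then e else 0)" using col0[OF j] by simp
    also have "\<dots> = (if j = 0 then e else 0)" using ce by simp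
    finally show ?thesis .
  qed
  define A3 where "A3 = mat k k (\<lambda>(i,j). A' $$ (Suc i, Suc j))"
  have A3: "A3 \<in> carrier_mat k k" unfolding A3_def by auto
  have hA3: "adj A3 = A3"
  proof (rule eq_matI)
    fix i j assume "i < dim_row A3" "j < dim_col A3"
    hence i: "i < k" and j: "j < k" using A3 by auto
    have "adj A3 $$ (i,j) = cnj (A' $$ (Suc j, Suc i))" using i j unfolding A3_def by simp
    also have "\<dots> = adj A' $$ (Suc i, Suc j)" using A' i j by simp
    also have "\<dots> = A3 $$ (i,j)" using hA' i j unfolding A3_def by simp
    finally show "adj A3 $$ (i,j) = A3 $$ (i,j)" .
  qed (insert A3, auto)
  from Suc.IH[OF A3 hA3] obtain U3 d3 where uU3: "unitary k U3" and A3d: "A3 = U3 * real_diag k d3 * adj U3" by auto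
  note U3 = unitaryD[OF uU3]
  define E where "E = mat 1 1 (\<lambda>_. e)"
  have E: "E \<in> carrier_mat 1 1" unfolding E_def by auto
  have A'blk: "A' = four_block_mat E (0\<^sub>m 1 k) (0\<^sub>m k 1) A3"
  proof (rule eq_matI)
    fix i j assume "i < dim_row (four_block_mat E (0\<^sub>m 1 k) (0\<^sub>m k 1) A3)" "j < dim_col (four_block_mat E (0\<^sub>m 1 k) (0\<^sub>m k 1) A3)"
    hence i: "i < Suc k" and j: "j < Suc k" using E A3 by auto
    show "A' $$ (i,j) = four_block_mat E (0\<^sub>m 1 k) (0\<^sub>m k 1) A3 $$ (i,j)"
    proof (cases "i = 0")
      case True thus ?thesis using i j E A3 row0[OF j] unfolding E_def by auto
    next
      case False
      then obtain i' where i': "i = Suc i'" by (cases i, auto)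
      show ?thesis
      proof (cases "j = 0")
        case True thus ?thesis using i j E A3 col0[OF i] False unfolding E_def by auto
      next
        case False
        then obtain j' where j': "j = Suc j'" by (cases j, auto)
        show ?thesis using i j E A3 unfolding i' j' A3_def by auto
      qed
    qed
  qed (insert A' E A3, auto)
  define U' where "U' = four_block_mat (1\<^sub>m 1) (0\<^sub>m 1 k) (0\<^sub>m k 1) U3"
  have U': "U' \<in> carrier_mat ?n ?n" unfolding U'_def using U3 by auto
  have adjU': "adj U' = four_block_mat (1\<^sub>m 1) (0\<^sub>m 1 k) (0\<^sub>m k 1) (adj U3)"
    unfolding U'_def by (rule eq_matI, insert U3, auto)
  have "adj U' * U' = four_block_mat (1\<^sub>m 1) (0\<^sub>m 1 k) (0\<^sub>m k 1) (1\<^sub>m k)"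
    unfolding adjU' unfolding U'_def by (subst mult_four_block_mat[of _ 1 1 _ k _ k _ _ 1 _ k], insert U3, auto)
  hence uU': "unitary ?n U'" using unitaryI[OF U'] by simp
  define d where "d = (\<lambda>i. if i = 0 then Re e else d3 (i - 1))"
  have Dblk: "real_diag ?n d = four_block_mat E (0\<^sub>m 1 k) (0\<^sub>m k 1) (real_diag k d3)"
    by (rule eq_matI, insert e_real, auto simp: E_def d_def)
  have "U' * real_diag ?n d * adj U' = four_block_mat E (0\<^sub>m 1 k) (0\<^sub>m k 1) (U3 * real_diag k d3 * adj U3)"
    unfolding Dblk adjU' unfolding U'_def
    by (subst mult_four_block_mat[of _ 1 1 _ k _ k _ _ 1 _ k], insert U3 E, auto,
        subst mult_four_block_mat[of _ 1 1 _ k _ k _ _ 1 _ k], insert U3 E, auto)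
  also have "\<dots> = A'" unfolding A'blk A3d ..
  finally have A'd: "A' = U' * real_diag ?n d * adj U'" by simp
  have "A = W * A' * adj W" unfolding A'_def using A W unitary_dims[OF uW] unitary_cancel[OF uW]
    by (simp add: mat_assoc)
  also have "\<dots> = (W * U') * real_diag ?n d * adj (W * U')" unfolding A'd using W U' unitary_dims[OF uW] unitary_dims[OF uU']
    by (simp add: adj_mult[of _ ?n ?n _ ?n] mat_assoc)
  finally show ?case using unitary_mult[OF uW uU'] by blast
qed


lemma mtrace_mult_comm: assumes "A \<in> carrier_mat n m" "B \<in> carrier_mat m n"
  shows "mtrace (A * B) = mtrace (B * A)"
proof -
  have "mtrace (A * B) = (\<Sum>i<n. \<Sum>l<m. A $$ (i,l) * B $$ (l,i))"
    unfolding mtrace_def using assms by (auto simp: scalar_prod_def lessThan_atLeast0 intro!: sum.cong)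
  also have "\<dots> = (\<Sum>l<m. \<Sum>i<n. B $$ (l,i) * A $$ (i,l))"
    by (subst sum.swap, simp add: mult.commute)
  also have "\<dots> = mtrace (B * A)"
    unfolding mtrace_def using assms by (auto simp: scalar_prod_def lessThan_atLeast0 intro!: sum.cong)
  finally show ?thesis .
qed

lemma mtrace_unitary_conj: assumes "unitary n U" "X \<in> carrier_mat n n"
  shows "mtrace (U * X * adj U) = mtrace X"
proof -
  note u = unitaryD[OF assms(1)]
  have "mtrace (U * X * adj U) = mtrace (adj U * (U * X))"
    by (rule mtrace_mult_comm[of _ n n], insert u assms, auto)
  also have "adj U * (U * X) = X" using unitary_cancel[OF assms(1)] assms by auto
  finally show ?thesis .
qed

lemma mtrace_real_diag: "mtrace (real_diag n d) = complex_of_real (\<Sum>i<n. d i)"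
  unfolding mtrace_def by simp

lemma real_diag_pow: "real_diag n d ^\<^sub>m k = real_diag n (\<lambda>i. d i ^ k)"
proof (induction k)
  case 0 thus ?case by (intro eq_matI, auto)
next
  case (Suc k)
  have "real_diag n d ^\<^sub>m Suc k = real_diag n (\<lambda>i. d i ^ k) * real_diag n d"
    using Suc by simp
  also have "\<dots> = real_diag n (\<lambda>i. d i ^ Suc k)"
  proof (rule eq_matI)
    fix i j assume "i < dim_row (real_diag n (\<lambda>i. d i ^ Suc k))" "j < dim_col (real_diag n (\<lambda>i. d i ^ Suc k))"
    hence i: "i < n" and j: "j < n" by auto
    have "(real_diag n (\<lambda>i. d i ^ k) * real_diag n d) $$ (i,j) =
      (\<Sum>l<n. real_diag n (\<lambda>i. d i ^ k) $$ (i,l) * real_diag n d $$ (l,j))"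
      by (rule mult_index_sum[of _ n n], insert i j, auto)
    also have "\<dots> = (\<Sum>l<n. if l = i then (if i = j then complex_of_real (d i ^ Suc k) else 0) else 0)"
      by (rule sum.cong, insert i j, auto)
    also have "\<dots> = real_diag n (\<lambda>i. d i ^ Suc k) $$ (i,j)" using i j by simp
    finally show "(real_diag n (\<lambda>i. d i ^ k) * real_diag n d) $$ (i,j) = real_diag n (\<lambda>i. d i ^ Suc k) $$ (i,j)" .
  qed auto
  finally show ?case .
qed

lemma unitary_conj_pow: assumes "unitary n U" "X \<in> carrier_mat n n"
  shows "(U * X * adj U) ^\<^sub>m k = U * (X ^\<^sub>m k) * adj U"
proof (induction k)
  case 0 thus ?case using unitaryD[OF assms(1)] assms by simp
next
  case (Suc k)
  note u = unitaryD[OF assms(1)] and ud = unitary_dims[OF assms(1)]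
  have Xk: "X ^\<^sub>m k \<in> carrier_mat n n" using assms by auto
  have "(U * X * adj U) ^\<^sub>m Suc k = U * (X ^\<^sub>m k) * adj U * (U * X * adj U)" using Suc by simp
  also have "\<dots> = U * (X ^\<^sub>m k * X) * adj U"
    using u ud Xk assms unitary_cancel[OF assms(1)] by (simp add: mat_assoc)
  finally show ?case by simp
qed

lemma mtrace_pow_decomp: assumes "unitary n U"
  shows "mtrace ((U * real_diag n d * adj U) ^\<^sub>m k) = complex_of_real (\<Sum>i<n. d i ^ k)"
  unfolding unitary_conj_pow[OF assms real_diag_carrier] real_diag_pow
  using mtrace_unitary_conj[OF assms real_diag_carrier] mtrace_real_diag by simp

section \<open>Power sums determine function sums\<close>

lemma interp_exists: "finite S \<Longrightarrow> \<exists>p. \<forall>x\<in>S. poly p x = (g x :: real)"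
proof (induction S rule: finite_induct)
  case empty thus ?case by auto
next
  case (insert a S)
  from insert obtain p where p: "\<forall>x\<in>S. poly p x = g x" by auto
  define q where "q = (\<Prod>s\<in>S. [:- s, 1:])"
  have q0: "x \<in> S \<Longrightarrow> poly q x = 0" for x unfolding q_def poly_prod using insert(1)
    by (intro prod_zero, auto)
  have qa: "poly q a \<noteq> 0" unfolding q_def poly_prod using insert(1,2) by auto
  define p' where "p' = p + smult ((g a - poly p a) / poly q a) q"
  show ?case by (rule exI[of _ p'], insert p q0 qa, auto simp: p'_def)
qed

lemma power_sums_eq: fixes d e :: "nat \<Rightarrow> real" and g :: "real \<Rightarrow> real"
  assumes "\<And>k. (\<Sum>i<n. d i ^ k) = (\<Sum>i<m. e i ^ k)"
  shows "(\<Sum>i<n. g (d i)) = (\<Sum>i<m. g (e i))"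
proof -
  obtain p where p: "\<forall>x\<in>d ` {..<n} \<union> e ` {..<m}. poly p x = g x"
    using interp_exists[of "d ` {..<n} \<union> e ` {..<m}" g] by auto
  have "(\<Sum>i<n. g (d i)) = (\<Sum>i<n. poly p (d i))" using p by auto
  also have "\<dots> = (\<Sum>i<n. \<Sum>j\<le>degree p. coeff p j * d i ^ j)" by (simp add: poly_altdef)
  also have "\<dots> = (\<Sum>j\<le>degree p. coeff p j * (\<Sum>i<n. d i ^ j))"
    by (subst sum.swap, simp add: sum_distrib_left)
  also have "\<dots> = (\<Sum>j\<le>degree p. coeff p j * (\<Sum>i<m. e i ^ j))" using assms by simp
  also have "\<dots> = (\<Sum>i<m. \<Sum>j\<le>degree p. coeff p j * e i ^ j)"
    by (subst sum.swap, simp add: sum_distrib_left)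
  also have "\<dots> = (\<Sum>i<m. poly p (e i))" by (simp add: poly_altdef)
  also have "\<dots> = (\<Sum>i<m. g (e i))" using p by auto
  finally show ?thesis .
qed

section \<open>Trace of functional calculus\<close>

lemma decomp_carrier: assumes "unitary n U" shows "U * real_diag n d * adj U \<in> carrier_mat n n"
  using unitaryD[OF assms] by auto

lemma mtrace_mat_fun: assumes U: "unitary n U" and A: "A = U * real_diag n d * adj U"
  shows "mtrace (mat_fun f A) = complex_of_real (\<Sum>i<n. f (d i))"
proof -
  have dimA: "dim_row A = n" using unitary_dims[OF U] A by simp
  let ?P = "\<lambda>B. \<exists>U d. unitary (dim_row A) U \<and> A = U * real_diag (dim_row A) d * adj U \<and>
      B = U * real_diag (dim_row A) (f \<circ> d) * adj U"
  have "?P (U * real_diag n (f \<circ> d) * adj U)" using U A dimA by auto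
  hence "?P (mat_fun f A)" unfolding mat_fun_def by (rule someI)
  then obtain V e where V: "unitary n V" and Ae: "A = V * real_diag n e * adj V"
    and B: "mat_fun f A = V * real_diag n (f \<circ> e) * adj V" unfolding dimA by auto
  have "mtrace (mat_fun f A) = complex_of_real (\<Sum>i<n. f (e i))"
    unfolding B using mtrace_unitary_conj[OF V real_diag_carrier] mtrace_real_diag by simp
  also have "(\<Sum>i<n. f (e i)) = (\<Sum>i<n. f (d i))"
  proof (rule power_sums_eq[where d=e and e=d and g=f and n=n and m=n])
    fix k
    have "complex_of_real (\<Sum>i<n. e i ^ k) = mtrace (A ^\<^sub>m k)" unfolding Ae mtrace_pow_decomp[OF V] ..
    also have "\<dots> = complex_of_real (\<Sum>i<n. d i ^ k)" unfolding A mtrace_pow_decomp[OF U] ..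
    finally show "(\<Sum>i<n. e i ^ k) = (\<Sum>i<n. d i ^ k)" by (simp only: of_real_eq_iff)
  qed
  finally show ?thesis .
qed

lemma tr_pow_decomp: assumes "unitary n U" "A = U * real_diag n d * adj U"
  shows "tr_pow A a = (\<Sum>i<n. d i powr a)"
  unfolding tr_pow_def mtrace_mat_fun[OF assms] by simp

lemma real_diag_mult: "real_diag n d * real_diag n e = real_diag n (\<lambda>i. d i * e i)"
proof (rule eq_matI)
  fix i j assume "i < dim_row (real_diag n (\<lambda>i. d i * e i))" "j < dim_col (real_diag n (\<lambda>i. d i * e i))"
  hence i: "i < n" and j: "j < n" by auto
  have "(real_diag n d * real_diag n e) $$ (i,j) = (\<Sum>l<n. real_diag n d $$ (i,l) * real_diag n e $$ (l,j))"
    by (rule mult_index_sum[of _ n n], insert i j, auto)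
  also have "\<dots> = (\<Sum>l<n. if l = i then (if i = j then complex_of_real (d i * e i) else 0) else 0)"
    by (rule sum.cong, insert i j, auto)
  also have "\<dots> = real_diag n (\<lambda>i. d i * e i) $$ (i,j)" using i j by simp
  finally show "(real_diag n d * real_diag n e) $$ (i,j) = real_diag n (\<lambda>i. d i * e i) $$ (i,j)" .
qed auto

lemma trace_norm_decomp: assumes U: "unitary n U" and A: "A = U * real_diag n d * adj U"
  shows "trace_norm A = (1/2) * (\<Sum>i<n. \<bar>d i\<bar>)"
proof -
  note u = unitaryD[OF U] and ud = unitary_dims[OF U]
  have "adj A * A = U * real_diag n (\<lambda>i. d i * d i) * adj U"
    unfolding A using u ud unitary_cancel[OF U] by (simp add: adj_mult' mat_assoc real_diag_mult[symmetric])
  from mtrace_mat_fun[OF U this, of sqrt]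
  show ?thesis unfolding trace_norm_def by (simp add: real_sqrt_mult_self)
qed


lemma cnj_sq: "z * cnj z = (complex_of_real (cmod z))\<^sup>2" "cnj z * z = (complex_of_real (cmod z))\<^sup>2"
  using complex_norm_square[of z] by (simp_all add: mult.commute)

lemma unitary_row_sq: assumes U: "unitary n U" and j: "j < n"
  shows "(\<Sum>k<n. (cmod (U $$ (j,k)))\<^sup>2) = 1"
proof -
  note u = unitaryD[OF U]
  have "complex_of_real (\<Sum>k<n. (cmod (U $$ (j,k)))\<^sup>2) = (\<Sum>k<n. U $$ (j,k) * adj U $$ (k,j))"
    using u j by (simp add: cnj_sq)
  also have "\<dots> = (U * adj U) $$ (j,j)" by (rule mult_index_sum[symmetric], insert u j, auto)
  also have "\<dots> = 1" using u j by simp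
  finally show ?thesis by (metis of_real_eq_1_iff)
qed

lemma unitary_col_sq: assumes U: "unitary n U" and k: "k < n"
  shows "(\<Sum>j<n. (cmod (U $$ (j,k)))\<^sup>2) = 1"
proof -
  note u = unitaryD[OF U]
  have "complex_of_real (\<Sum>j<n. (cmod (U $$ (j,k)))\<^sup>2) = (\<Sum>j<n. adj U $$ (k,j) * U $$ (j,k))"
    using u k by (simp add: cnj_sq)
  also have "\<dots> = (adj U * U) $$ (k,k)" by (rule mult_index_sum[symmetric], insert u k, auto)
  also have "\<dots> = 1" using u k by simp
  finally show ?thesis by (metis of_real_eq_1_iff)
qed

lemma diag_conj: assumes G: "G \<in> carrier_mat n n" and j: "j < n"
  shows "(G * real_diag n d * adj G) $$ (j,j) = complex_of_real (\<Sum>k<n. (cmod (G $$ (j,k)))\<^sup>2 * d k)"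
proof -
  have GD: "l < n \<Longrightarrow> (G * real_diag n d) $$ (j,l) = G $$ (j,l) * d l" for l
  proof -
    assume l: "l < n"
    have "(G * real_diag n d) $$ (j,l) = (\<Sum>m<n. G $$ (j,m) * real_diag n d $$ (m,l))"
      by (rule mult_index_sum, insert G j l, auto)
    also have "\<dots> = (\<Sum>m<n. if m = l then G $$ (j,l) * d l else 0)"
      by (rule sum.cong, insert l, auto)
    finally show ?thesis using l by simp
  qed
  have "(G * real_diag n d * adj G) $$ (j,j) = (\<Sum>l<n. (G * real_diag n d) $$ (j,l) * adj G $$ (l,j))"
    by (rule mult_index_sum, insert G j, auto)
  also have "\<dots> = (\<Sum>l<n. complex_of_real ((cmod (G $$ (j,l)))\<^sup>2 * d l))"
  proof (rule sum.cong[OF refl])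
    fix l assume "l \<in> {..<n}" hence l: "l < n" by simp
    show "(G * real_diag n d) $$ (j,l) * adj G $$ (l,j) = complex_of_real ((cmod (G $$ (j,l)))\<^sup>2 * d l)"
      unfolding GD[OF l] using G j l by (simp add: cnj_sq mult_ac)
  qed
  finally show ?thesis by simp
qed

section \<open>Jensen/Peierls for diagonal entries\<close>

lemma jensen_diag: assumes U: "unitary n U" and V: "unitary n V"
  and H: "H = U * real_diag n d * adj U"
  and conv: "convex_on C f" and dC: "\<And>i. i < n \<Longrightarrow> d i \<in> C"
  shows "(\<Sum>j<n. f (Re ((adj V * H * V) $$ (j,j)))) \<le> (\<Sum>k<n. f (d k))"
proof -
  define G where "G = adj V * U"
  have uG: "unitary n G" unfolding G_def by (rule unitary_mult[OF unitary_adj[OF V] U])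
  note g = unitaryD[OF uG]
  have "adj V * H * V = G * real_diag n d * adj G"
    unfolding H G_def using unitary_dims[OF U] unitary_dims[OF V] by (simp add: adj_mult' mat_assoc)
  hence dj: "j < n \<Longrightarrow> Re ((adj V * H * V) $$ (j,j)) = (\<Sum>k<n. (cmod (G $$ (j,k)))\<^sup>2 * d k)" for j
    using diag_conj[OF g(1)] by simp
  have "(\<Sum>j<n. f (Re ((adj V * H * V) $$ (j,j)))) = (\<Sum>j<n. f (\<Sum>k<n. (cmod (G $$ (j,k)))\<^sup>2 * d k))"
    by (rule sum.cong, auto simp: dj)
  also have "\<dots> \<le> (\<Sum>j<n. \<Sum>k<n. (cmod (G $$ (j,k)))\<^sup>2 * f (d k))"
  proof (rule sum_mono)
    fix j assume "j \<in> {..<n}" hence j: "j < n" by simp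
    hence ne: "{..<n} \<noteq> {}" by auto
    show "f (\<Sum>k<n. (cmod (G $$ (j,k)))\<^sup>2 * d k) \<le> (\<Sum>k<n. (cmod (G $$ (j,k)))\<^sup>2 * f (d k))"
      using convex_on_sum[OF finite_lessThan ne conv, of "\<lambda>k. (cmod (G $$ (j,k)))\<^sup>2" d]
        unitary_row_sq[OF uG j] dC by auto
  qed
  also have "\<dots> = (\<Sum>k<n. (\<Sum>j<n. (cmod (G $$ (j,k)))\<^sup>2) * f (d k))"
    by (subst sum.swap, simp add: sum_distrib_right)
  also have "\<dots> = (\<Sum>k<n. f (d k))" by (rule sum.cong, auto simp: unitary_col_sq[OF uG])
  finally show ?thesis .
qed

lemma quad_form: assumes A: "A \<in> carrier_mat n n" and V: "V \<in> carrier_mat n n" and j: "j < n"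
  shows "(adj V * A * V) $$ (j,j) = scalar_prod (map_vec cnj (col V j)) (A *\<^sub>v col V j)"
proof -
  have "(adj V * A * V) $$ (j,j) = (\<Sum>l<n. (adj V * A) $$ (j,l) * V $$ (l,j))"
    by (rule mult_index_sum, insert A V j, auto)
  also have "\<dots> = (\<Sum>l<n. \<Sum>m<n. cnj (V $$ (m,j)) * A $$ (m,l) * V $$ (l,j))"
    by (rule sum.cong[OF refl], subst mult_index_sum[of _ n n], insert A V j, auto simp: sum_distrib_right)
  also have "\<dots> = (\<Sum>m<n. cnj (V $$ (m,j)) * (\<Sum>l<n. A $$ (m,l) * V $$ (l,j)))"
    by (subst sum.swap, simp add: sum_distrib_left mult.assoc)
  also have "\<dots> = scalar_prod (map_vec cnj (col V j)) (A *\<^sub>v col V j)"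
    using A V j by (auto simp: scalar_prod_def lessThan_atLeast0 mult_mat_vec_def intro!: sum.cong)
  finally show ?thesis .
qed

lemma density_diag_nonneg: assumes "density n \<rho>" "V \<in> carrier_mat n n" "j < n"
  shows "0 \<le> Re ((adj V * \<rho> * V) $$ (j,j))"
proof -
  from assms(1) have r: "\<rho> \<in> carrier_mat n n" and psd: "\<And>v. v \<in> carrier_vec n \<Longrightarrow> 0 \<le> Re (scalar_prod (map_vec cnj v) (\<rho> *\<^sub>v v))"
    unfolding density_def by auto
  show ?thesis unfolding quad_form[OF r assms(2,3)] by (rule psd, insert assms(2,3), auto)
qed

lemma density_decomp: assumes rho: "density n \<rho>"
  shows "\<exists>U d. unitary n U \<and> \<rho> = U * real_diag n d * adj U \<and> (\<forall>i<n. 0 \<le> d i) \<and> (\<Sum>i<n. d i) = 1"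
proof -
  from rho have r: "\<rho> \<in> carrier_mat n n" and h: "adj \<rho> = \<rho>" and tr: "mtrace \<rho> = 1"
    unfolding density_def by auto
  from spectral[OF r h] obtain U d where U: "unitary n U" and rd: "\<rho> = U * real_diag n d * adj U" by auto
  note u = unitaryD[OF U] and ud = unitary_dims[OF U]
  have D: "adj U * \<rho> * U = real_diag n d" unfolding rd using u ud unitary_cancel[OF U]
    by (simp add: mat_assoc)
  have "0 \<le> d i" if i: "i < n" for i
    using density_diag_nonneg[OF rho u(1) i] unfolding D using i by simp
  moreover have "complex_of_real (\<Sum>i<n. d i) = 1"
    using tr unfolding rd mtrace_unitary_conj[OF U real_diag_carrier] mtrace_real_diag .
  hence "(\<Sum>i<n. d i) = 1" by (simp only: of_real_eq_1_iff)
  ultimately show ?thesis using U rd by blast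
qed

lemma powr_convex0: assumes p: "p \<ge> 1" shows "convex_on {0..} (\<lambda>x::real. x powr p)"
proof (rule convex_onI)
  fix t x y :: real assume t: "0 < t" "t < 1" and x: "x \<in> {0..}" and y: "y \<in> {0..}"
  show "((1 - t) *\<^sub>R x + t *\<^sub>R y) powr p \<le> (1 - t) * x powr p + t * y powr p"
  proof (cases "x = 0 \<or> y = 0")
    case False
    with x y have "x \<in> {0<..}" "y \<in> {0<..}" by auto
    from convex_onD[OF powr_convex[OF p], of t x y] this t show ?thesis by auto
  next
    case True
    have le: "s powr p \<le> s" if "0 \<le> s" "s \<le> 1" for s :: real
      using powr_mono'[of 1 p s] that p by simp
    have yp: "0 \<le> y powr p" "0 \<le> x powr p" by auto
    show ?thesis
    proof (cases "x = 0")
      case True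
      have "((1 - t) *\<^sub>R x + t *\<^sub>R y) powr p = t powr p * y powr p" using True by (simp add: powr_mult)
      also have "\<dots> \<le> t * y powr p" by (rule mult_right_mono[OF le yp(1)], insert t, auto)
      finally show ?thesis using True by simp
    next
      case False
      with \<open>x = 0 \<or> y = 0\<close> have y0: "y = 0" by auto
      have "((1 - t) *\<^sub>R x + t *\<^sub>R y) powr p = (1 - t) powr p * x powr p" using y0 by (simp add: powr_mult)
      also have "\<dots> \<le> (1 - t) * x powr p" by (rule mult_right_mono[OF le yp(2)], insert t, auto)
      finally show ?thesis using y0 by simp
    qed
  qed
qed (auto simp: convex_real_interval)


lemma powr_concave0: assumes p: "0 < p" "p \<le> 1" shows "convex_on {0..} (\<lambda>x::real. - (x powr p))"
proof (rule convex_onI)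
  have cc: "concave_on {0<..} (\<lambda>x::real. x powr p)"
  proof (rule f''_le0_imp_concave[where f' = "\<lambda>x. p * x powr (p - 1)" and f'' = "\<lambda>x. p * (p - 1) * x powr (p - 2)"])
    fix x :: real assume x: "x \<in> {0<..}"
    show "((\<lambda>x. x powr p) has_real_derivative p * x powr (p - 1)) (at x)"
      using x by (auto intro!: derivative_eq_intros)
    show "((\<lambda>x. p * x powr (p - 1)) has_real_derivative p * (p - 1) * x powr (p - 2)) (at x)"
      using x by (auto intro!: derivative_eq_intros simp: algebra_simps)
    show "p * (p - 1) * x powr (p - 2) \<le> 0"
    proof (rule mult_nonpos_nonneg)
      show "p * (p - 1) \<le> 0" using p by (simp add: mult_nonneg_nonpos)
    qed auto
  qed auto
  fix t x y :: real assume t: "0 < t" "t < 1" and x: "x \<in> {0..}" and y: "y \<in> {0..}"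
  show "- (((1 - t) *\<^sub>R x + t *\<^sub>R y) powr p) \<le> (1 - t) * - (x powr p) + t * - (y powr p)"
  proof (cases "x = 0 \<or> y = 0")
    case False
    with x y have "x \<in> {0<..}" "y \<in> {0<..}" by auto
    from concave_onD[OF cc, of t x y] this t show ?thesis by auto
  next
    case True
    have le: "s \<le> s powr p" if "0 \<le> s" "s \<le> 1" for s :: real
      using powr_mono'[of p 1 s] that p by simp
    have yp: "0 \<le> y powr p" "0 \<le> x powr p" by auto
    show ?thesis
    proof (cases "x = 0")
      case True
      have "((1 - t) *\<^sub>R x + t *\<^sub>R y) powr p = t powr p * y powr p" using True by (simp add: powr_mult)
      moreover have "t * y powr p \<le> t powr p * y powr p" by (rule mult_right_mono[OF le yp(1)], insert t, auto)
      ultimately show ?thesis using True by simp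
    next
      case False
      with \<open>x = 0 \<or> y = 0\<close> have y0: "y = 0" by auto
      have "((1 - t) *\<^sub>R x + t *\<^sub>R y) powr p = (1 - t) powr p * x powr p" using y0 by (simp add: powr_mult)
      moreover have "(1 - t) * x powr p \<le> (1 - t) powr p * x powr p" by (rule mult_right_mono[OF le yp(2)], insert t, auto)
      ultimately show ?thesis using y0 by simp
    qed
  qed
qed (auto simp: convex_real_interval)

lemma qf_sum: assumes "A \<in> carrier_mat n n" "v \<in> carrier_vec n"
  shows "scalar_prod (map_vec cnj v) (A *\<^sub>v v) = (\<Sum>i<n. \<Sum>j<n. cnj (v $ i) * A $$ (i,j) * v $ j)"
  using assms by (auto simp: scalar_prod_def lessThan_atLeast0 mult_mat_vec_def sum_distrib_left mult.assoc intro!: sum.cong)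

lemma conj_entry: assumes "A \<in> carrier_mat n n" "V \<in> carrier_mat n n" "i < n" "j < n"
  shows "(adj V * A * V) $$ (i,j) = (\<Sum>l<n. \<Sum>m<n. cnj (V $$ (m,i)) * A $$ (m,l) * V $$ (l,j))"
proof -
  have "(adj V * A * V) $$ (i,j) = (\<Sum>l<n. (adj V * A) $$ (i,l) * V $$ (l,j))"
    by (rule mult_index_sum, insert assms, auto)
  also have "\<dots> = (\<Sum>l<n. \<Sum>m<n. cnj (V $$ (m,i)) * A $$ (m,l) * V $$ (l,j))"
    by (rule sum.cong[OF refl], subst mult_index_sum[of _ n n], insert assms, auto simp: sum_distrib_right)
  finally show ?thesis .
qed

definition mix :: "complex mat \<Rightarrow> complex mat \<Rightarrow> complex mat" where
  "mix \<rho> \<sigma> = (1/2) \<cdot>\<^sub>m (\<rho> + \<sigma>)"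

lemma mix_carrier: "\<rho> \<in> carrier_mat n n \<Longrightarrow> \<sigma> \<in> carrier_mat n n \<Longrightarrow> mix \<rho> \<sigma> \<in> carrier_mat n n"
  unfolding mix_def by auto

lemma mix_index: "\<rho> \<in> carrier_mat n n \<Longrightarrow> \<sigma> \<in> carrier_mat n n \<Longrightarrow> i < n \<Longrightarrow> j < n \<Longrightarrow>
  mix \<rho> \<sigma> $$ (i,j) = (\<rho> $$ (i,j) + \<sigma> $$ (i,j)) / 2"
  unfolding mix_def by auto

lemma mix_density: assumes r: "density n \<rho>" and s: "density n \<sigma>"
  shows "density n (mix \<rho> \<sigma>)"
proof -
  from r have r1: "\<rho> \<in> carrier_mat n n" "adj \<rho> = \<rho>" "mtrace \<rho> = 1"
    and r2: "\<And>v. v \<in> carrier_vec n \<Longrightarrow> 0 \<le> Re (scalar_prod (map_vec cnj v) (\<rho> *\<^sub>v v))"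
    unfolding density_def by auto
  from s have s1: "\<sigma> \<in> carrier_mat n n" "adj \<sigma> = \<sigma>" "mtrace \<sigma> = 1"
    and s2: "\<And>v. v \<in> carrier_vec n \<Longrightarrow> 0 \<le> Re (scalar_prod (map_vec cnj v) (\<sigma> *\<^sub>v v))"
    unfolding density_def by auto
  have M: "mix \<rho> \<sigma> \<in> carrier_mat n n" using mix_carrier r1 s1 by auto
  have "adj (mix \<rho> \<sigma>) = mix \<rho> \<sigma>"
  proof (rule eq_matI)
    fix i j assume "i < dim_row (mix \<rho> \<sigma>)" "j < dim_col (mix \<rho> \<sigma>)"
    hence i: "i < n" and j: "j < n" using M by auto
    have "adj (mix \<rho> \<sigma>) $$ (i,j) = cnj (mix \<rho> \<sigma> $$ (j,i))" using M i j by simp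
    also have "\<dots> = cnj ((\<rho> $$ (j,i) + \<sigma> $$ (j,i)) / 2)" by (simp only: mix_index[OF r1(1) s1(1) j i])
    also have "\<dots> = (\<rho> $$ (i,j) + \<sigma> $$ (i,j)) / 2"
    proof -
      have hr: "cnj (\<rho> $$ (j,i)) = \<rho> $$ (i,j)" using arg_cong[OF r1(2), of "\<lambda>A. A $$ (i,j)"] r1(1) i j by simp
      have hs: "cnj (\<sigma> $$ (j,i)) = \<sigma> $$ (i,j)" using arg_cong[OF s1(2), of "\<lambda>A. A $$ (i,j)"] s1(1) i j by simp
      show ?thesis using hr hs by simp
    qed
    also have "\<dots> = mix \<rho> \<sigma> $$ (i,j)" by (simp only: mix_index[OF r1(1) s1(1) i j])
    finally show "adj (mix \<rho> \<sigma>) $$ (i,j) = mix \<rho> \<sigma> $$ (i,j)" .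
  qed (insert M, auto)
  moreover have "mtrace (mix \<rho> \<sigma>) = 1"
  proof -
    have "mtrace (mix \<rho> \<sigma>) = (\<Sum>i<n. (\<rho> $$ (i,i) + \<sigma> $$ (i,i)) / 2)"
      unfolding mtrace_def using M r1 s1 by (auto intro!: sum.cong simp: mix_index)
    also have "\<dots> = (mtrace \<rho> + mtrace \<sigma>) / 2" unfolding mtrace_def using r1 s1
      by (simp only: sum_divide_distrib[symmetric] sum.distrib carrier_matD)
    finally show ?thesis using r1 s1 by simp
  qed
  moreover have "0 \<le> Re (scalar_prod (map_vec cnj v) (mix \<rho> \<sigma> *\<^sub>v v))" if v: "v \<in> carrier_vec n" for v
  proof -
    have "scalar_prod (map_vec cnj v) (mix \<rho> \<sigma> *\<^sub>v v) =
      (scalar_prod (map_vec cnj v) (\<rho> *\<^sub>v v) + scalar_prod (map_vec cnj v) (\<sigma> *\<^sub>v v)) / 2"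
      unfolding qf_sum[OF M v] qf_sum[OF r1(1) v] qf_sum[OF s1(1) v]
      by (simp add: mix_index[OF r1(1) s1(1)] sum.distrib sum_divide_distrib algebra_simps add_divide_distrib)
    hence "Re (scalar_prod (map_vec cnj v) (mix \<rho> \<sigma> *\<^sub>v v)) =
      (Re (scalar_prod (map_vec cnj v) (\<rho> *\<^sub>v v)) + Re (scalar_prod (map_vec cnj v) (\<sigma> *\<^sub>v v))) / 2"
      by (simp only: Re_divide_numeral plus_complex.sel)
    thus ?thesis using r2[OF v] s2[OF v] by simp
  qed
  ultimately show ?thesis unfolding density_def using M by auto
qed

lemma mix_diag: assumes "\<rho> \<in> carrier_mat n n" "\<sigma> \<in> carrier_mat n n" "V \<in> carrier_mat n n" "j < n"
  shows "(adj V * mix \<rho> \<sigma> * V) $$ (j,j) = ((adj V * \<rho> * V) $$ (j,j) + (adj V * \<sigma> * V) $$ (j,j)) / 2"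
  unfolding conj_entry[OF mix_carrier[OF assms(1,2)] assms(3,4,4)] conj_entry[OF assms(1) assms(3,4,4)]
    conj_entry[OF assms(2) assms(3,4,4)]
  using assms by (simp add: mix_index sum.distrib sum_divide_distrib algebra_simps add_divide_distrib)

lemma density_eig: assumes rho: "density n \<rho>" and U: "unitary n U" and rd: "\<rho> = U * real_diag n d * adj U"
  shows "\<And>i. i < n \<Longrightarrow> 0 \<le> d i" "(\<Sum>i<n. d i) = 1" "\<And>i. i < n \<Longrightarrow> d i \<le> 1"
proof -
  from rho have tr: "mtrace \<rho> = 1" unfolding density_def by auto
  note u = unitaryD[OF U] and ud = unitary_dims[OF U]
  have D: "adj U * \<rho> * U = real_diag n d" unfolding rd using u ud unitary_cancel[OF U]
    by (simp add: mat_assoc)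
  show nn: "0 \<le> d i" if i: "i < n" for i
    using density_diag_nonneg[OF rho u(1) i] unfolding D using i by simp
  have "complex_of_real (\<Sum>i<n. d i) = 1"
    using tr unfolding rd mtrace_unitary_conj[OF U real_diag_carrier] mtrace_real_diag .
  thus s: "(\<Sum>i<n. d i) = 1" by (simp only: of_real_eq_1_iff)
  show "d i \<le> 1" if i: "i < n" for i
  proof -
    have "d i \<le> (\<Sum>i<n. d i)" by (rule member_le_sum, insert nn i, auto)
    thus ?thesis using s by simp
  qed
qed

lemma diag_conj_eig: assumes U: "unitary n U" and rd: "\<rho> = U * real_diag n d * adj U" and j: "j < n"
  shows "Re ((adj U * \<rho> * U) $$ (j,j)) = d j"
proof -
  note u = unitaryD[OF U] and ud = unitary_dims[OF U]
  have D: "adj U * \<rho> * U = real_diag n d" unfolding rd using u ud unitary_cancel[OF U]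
    by (simp add: mat_assoc)
  show ?thesis unfolding D using j by simp
qed

lemma mid_convex: assumes r: "density n \<rho>" and s: "density n \<sigma>"
  and U: "unitary n U" and rd: "\<rho> = U * real_diag n r * adj U"
  and V: "unitary n V" and sd: "\<sigma> = V * real_diag n s * adj V"
  and W: "unitary n W" and md: "mix \<rho> \<sigma> = W * real_diag n m * adj W"
  and g: "convex_on {0..} g"
  shows "(\<Sum>j<n. g (m j)) \<le> ((\<Sum>k<n. g (r k)) + (\<Sum>k<n. g (s k))) / 2"
proof -
  have rc: "\<rho> \<in> carrier_mat n n" and sc: "\<sigma> \<in> carrier_mat n n" using r s unfolding density_def by auto
  note w = unitaryD[OF W]
  define p where "p = (\<lambda>j. Re ((adj W * \<rho> * W) $$ (j,j)))"
  define q where "q = (\<lambda>j. Re ((adj W * \<sigma> * W) $$ (j,j)))"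
  have mj: "j < n \<Longrightarrow> m j = (p j + q j) / 2" for j
    using diag_conj_eig[OF W md, of j] mix_diag[OF rc sc w(1), of j] unfolding p_def q_def by simp
  have p0: "j < n \<Longrightarrow> 0 \<le> p j" for j unfolding p_def by (rule density_diag_nonneg[OF r w(1)])
  have q0: "j < n \<Longrightarrow> 0 \<le> q j" for j unfolding q_def by (rule density_diag_nonneg[OF s w(1)])
  have "(\<Sum>j<n. g (m j)) \<le> (\<Sum>j<n. (g (p j) + g (q j)) / 2)"
  proof (rule sum_mono)
    fix j assume "j \<in> {..<n}" hence j: "j < n" by simp
    have "g ((1 - 1/2) *\<^sub>R p j + (1/2) *\<^sub>R q j) \<le> (1 - 1/2) * g (p j) + (1/2) * g (q j)"
      by (rule convex_onD[OF g], insert p0[OF j] q0[OF j], auto)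
    thus "g (m j) \<le> (g (p j) + g (q j)) / 2" unfolding mj[OF j] by (simp add: add_divide_distrib)
  qed
  also have "\<dots> = ((\<Sum>j<n. g (p j)) + (\<Sum>j<n. g (q j))) / 2"
    by (simp only: sum_divide_distrib[symmetric] sum.distrib)
  also have "\<dots> \<le> ((\<Sum>k<n. g (r k)) + (\<Sum>k<n. g (s k))) / 2"
  proof -
    have "(\<Sum>j<n. g (p j)) \<le> (\<Sum>k<n. g (r k))" unfolding p_def
      by (rule jensen_diag[OF U W rd g], insert density_eig(1)[OF r U rd], auto)
    moreover have "(\<Sum>j<n. g (q j)) \<le> (\<Sum>k<n. g (s k))" unfolding q_def
      by (rule jensen_diag[OF V W sd g], insert density_eig(1)[OF s V sd], auto)
    ultimately show ?thesis by simp
  qed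
  finally show ?thesis .
qed


lemma sum_split2: "(\<Sum>j<n + m. f j) = (\<Sum>j<n. f j) + (\<Sum>j<m. f (n + (j::nat)))"
  by (induction m, auto simp: add.assoc)

lemma real_diag_smult: "real_diag n (\<lambda>i. c * r i) = complex_of_real c \<cdot>\<^sub>m real_diag n r"
  by (rule eq_matI, auto)

lemma decomp_smult: assumes U: "unitary n U"
  shows "U * real_diag n (\<lambda>i. c * r i) * adj U = complex_of_real c \<cdot>\<^sub>m (U * real_diag n r * adj U)"
proof -
  note u = unitaryD[OF U]
  have "U * (complex_of_real c \<cdot>\<^sub>m real_diag n r) = complex_of_real c \<cdot>\<^sub>m (U * real_diag n r)"
    by (rule mult_smult_distrib[of _ n n], insert u, auto)
  moreover have "(complex_of_real c \<cdot>\<^sub>m (U * real_diag n r)) * adj U = complex_of_real c \<cdot>\<^sub>m (U * real_diag n r * adj U)"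
    by (rule mult_smult_assoc_mat[of _ n n], insert u, auto)
  ultimately show ?thesis unfolding real_diag_smult by simp
qed

lemma adj_square_diag: assumes B: "B \<in> carrier_mat m n" and j: "j < n"
  shows "(adj B * B) $$ (j,j) = complex_of_real (\<Sum>l<m. (cmod (B $$ (l,j)))\<^sup>2)"
proof -
  have "(adj B * B) $$ (j,j) = (\<Sum>l<m. adj B $$ (j,l) * B $$ (l,j))"
    by (rule mult_index_sum, insert B j, auto)
  also have "\<dots> = (\<Sum>l<m. complex_of_real ((cmod (B $$ (l,j)))\<^sup>2))"
    by (rule sum.cong, insert B j, auto simp: cnj_sq)
  finally show ?thesis by simp
qed

lemma pow_conj_shift: assumes Z: "Z \<in> carrier_mat N N"
  shows "(Z * adj Z) ^\<^sub>m Suc k = Z * ((adj Z * Z) ^\<^sub>m k) * adj Z"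
proof (induction k)
  case 0 thus ?case using Z by simp
next
  case (Suc k)
  have H: "(adj Z * Z) ^\<^sub>m k \<in> carrier_mat N N" using Z by auto
  have "(Z * adj Z) ^\<^sub>m Suc (Suc k) = Z * ((adj Z * Z) ^\<^sub>m k) * adj Z * (Z * adj Z)"
    using Suc by simp
  also have "\<dots> = Z * (((adj Z * Z) ^\<^sub>m k) * (adj Z * Z)) * adj Z"
    using Z H by (simp add: mat_assoc)
  finally show ?case by simp
qed

lemma block_pow: assumes M: "M \<in> carrier_mat n n"
  shows "four_block_mat M (0\<^sub>m n n) (0\<^sub>m n n) (0\<^sub>m n n) ^\<^sub>m Suc k = four_block_mat (M ^\<^sub>m Suc k) (0\<^sub>m n n) (0\<^sub>m n n) (0\<^sub>m n n)"
proof (induction k)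
  case 0 thus ?case using M by (simp add: mult_four_block_mat[of _ n n _ n _ n _ _ n _ n])
next
  case (Suc k)
  have Mk: "M ^\<^sub>m Suc k \<in> carrier_mat n n" using M by auto
  show ?case unfolding pow_mat.simps(2)[of _ "Suc k"] Suc using M Mk
    by (simp add: mult_four_block_mat[of _ n n _ n _ n _ _ n _ n])
qed

lemma mtrace_block: assumes M: "M \<in> carrier_mat n n"
  shows "mtrace (four_block_mat M (0\<^sub>m n n) (0\<^sub>m n n) (0\<^sub>m n n)) = mtrace M"
  unfolding mtrace_def using M by (simp add: sum_split2)

lemma superadd: assumes r: "density n \<rho>" and s: "density n \<sigma>"
  and U: "unitary n U" and rd: "\<rho> = U * real_diag n r * adj U"
  and V: "unitary n V" and sd: "\<sigma> = V * real_diag n s * adj V"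
  and W: "unitary n W" and md: "mix \<rho> \<sigma> = W * real_diag n m * adj W"
  and g0: "g 0 = 0" and g: "convex_on {0..} g"
  shows "(\<Sum>j<n. g (r j / 2)) + (\<Sum>j<n. g (s j / 2)) \<le> (\<Sum>j<n. g (m j))"
proof -
  note u = unitaryD[OF U] and v = unitaryD[OF V] and w = unitaryD[OF W]
  note ud = unitary_dims[OF U] and vd = unitary_dims[OF V]
  have r0: "i < n \<Longrightarrow> 0 \<le> r i" for i using density_eig(1)[OF r U rd] .
  have s0: "i < n \<Longrightarrow> 0 \<le> s i" for i using density_eig(1)[OF s V sd] .
  define X where "X = U * real_diag n (\<lambda>i. sqrt (r i / 2)) * adj U"
  define Y where "Y = V * real_diag n (\<lambda>i. sqrt (s i / 2)) * adj V"
  have X: "X \<in> carrier_mat n n" "adj X = X" unfolding X_def using u ud by (auto simp: adj_mult' mat_assoc)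
  have Y: "Y \<in> carrier_mat n n" "adj Y = Y" unfolding Y_def using v vd by (auto simp: adj_mult' mat_assoc)
  have rdiag: "real_diag n (\<lambda>i. sqrt (r i / 2)) * real_diag n (\<lambda>i. sqrt (r i / 2)) = real_diag n (\<lambda>i. (1/2) * r i)"
    unfolding real_diag_mult by (rule eq_matI, insert r0, auto)
  have sdiag: "real_diag n (\<lambda>i. sqrt (s i / 2)) * real_diag n (\<lambda>i. sqrt (s i / 2)) = real_diag n (\<lambda>i. (1/2) * s i)"
    unfolding real_diag_mult by (rule eq_matI, insert s0, auto)
  have XX: "X * X = U * real_diag n (\<lambda>i. (1/2) * r i) * adj U"
    unfolding X_def rdiag[symmetric] using u ud unitary_cancel[OF U] by (simp add: mat_assoc)
  have YY: "Y * Y = V * real_diag n (\<lambda>i. (1/2) * s i) * adj V"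
    unfolding Y_def sdiag[symmetric] using v vd unitary_cancel[OF V] by (simp add: mat_assoc)
  have rc: "\<rho> \<in> carrier_mat n n" and sc: "\<sigma> \<in> carrier_mat n n" using r s unfolding density_def by auto
  have XXYY: "X * X + Y * Y = mix \<rho> \<sigma>"
    unfolding XX YY decomp_smult[OF U] decomp_smult[OF V] rd[symmetric] sd[symmetric] mix_def
    using rc sc by (simp add: add_smult_distrib_left_mat)
  define Z where "Z = four_block_mat X Y (0\<^sub>m n n) (0\<^sub>m n n)"
  have Zc: "Z \<in> carrier_mat (n + n) (n + n)" unfolding Z_def using X Y by auto
  have adjZ: "adj Z = four_block_mat X (0\<^sub>m n n) Y (0\<^sub>m n n)"
  proof -
    have "adj Z = four_block_mat (adj X) (0\<^sub>m n n) (adj Y) (0\<^sub>m n n)"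
      unfolding Z_def by (rule eq_matI, insert X(1) Y(1), auto)
    thus ?thesis using X Y by simp
  qed
  have ZZ: "Z * adj Z = four_block_mat (mix \<rho> \<sigma>) (0\<^sub>m n n) (0\<^sub>m n n) (0\<^sub>m n n)"
    unfolding adjZ unfolding Z_def XXYY[symmetric]
    using X Y by (simp add: mult_four_block_mat[of _ n n _ n _ n _ _ n _ n])
  define H where "H = adj Z * Z"
  have Hc: "H \<in> carrier_mat (n + n) (n + n)" unfolding H_def using Zc by auto
  have hH: "adj H = H" unfolding H_def using Zc by (simp add: adj_mult')
  from spectral[OF Hc hH] obtain Q h where Q: "unitary (n + n) Q" and Hd: "H = Q * real_diag (n + n) h * adj Q" by auto
  note q = unitaryD[OF Q] and qd = unitary_dims[OF Q]
  have h0: "j < n + n \<Longrightarrow> 0 \<le> h j" for j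
  proof -
    assume j: "j < n + n"
    have "adj Q * H * Q = adj (Z * Q) * (Z * Q)" unfolding H_def using Zc qd by (simp add: adj_mult' mat_assoc)
    hence "Re ((adj Q * H * Q) $$ (j,j)) = (\<Sum>l<n + n. (cmod ((Z * Q) $$ (l,j)))\<^sup>2)"
      using adj_square_diag[of "Z * Q" "n + n" "n + n" j] Zc q j by simp
    moreover have "Re ((adj Q * H * Q) $$ (j,j)) = h j" by (rule diag_conj_eig[OF Q Hd j])
    ultimately show ?thesis by (simp add: sum_nonneg)
  qed
  define m' where "m' = (\<lambda>j. if j < n then m j else 0)"
  have ps: "(\<Sum>j<n + n. g (h j)) = (\<Sum>j<n + n. g (m' j))"
  proof (rule power_sums_eq[where d=h and e=m' and g=g and n="n+n" and m="n+n"])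
    fix k
    show "(\<Sum>j<n + n. h j ^ k) = (\<Sum>j<n + n. m' j ^ k)"
    proof (cases k)
      case 0 thus ?thesis by simp
    next
      case (Suc k')
      have Mc: "mix \<rho> \<sigma> \<in> carrier_mat n n" using mix_carrier[OF rc sc] .
      have "complex_of_real (\<Sum>j<n + n. h j ^ k) = mtrace (H ^\<^sub>m k)" unfolding Hd mtrace_pow_decomp[OF Q] ..
      also have "\<dots> = mtrace (H ^\<^sub>m k' * adj Z * Z)" unfolding Suc H_def using Zc
        by (simp add: mat_assoc)
      also have "\<dots> = mtrace (Z * (H ^\<^sub>m k' * adj Z))"
        by (rule mtrace_mult_comm[of _ "n + n" "n + n"], insert Zc Hc, auto)
      also have "Z * (H ^\<^sub>m k' * adj Z) = (Z * adj Z) ^\<^sub>m k" unfolding Suc pow_conj_shift[OF Zc] H_def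
        using Zc by (simp add: mat_assoc)
      also have "\<dots> = four_block_mat (mix \<rho> \<sigma> ^\<^sub>m k) (0\<^sub>m n n) (0\<^sub>m n n) (0\<^sub>m n n)"
        unfolding ZZ Suc by (rule block_pow[OF Mc])
      also have "mtrace \<dots> = mtrace (mix \<rho> \<sigma> ^\<^sub>m k)" by (rule mtrace_block, insert Mc, auto)
      also have "\<dots> = complex_of_real (\<Sum>j<n. m j ^ k)" unfolding md mtrace_pow_decomp[OF W] ..
      finally have "(\<Sum>j<n + n. h j ^ k) = (\<Sum>j<n. m j ^ k)" by (simp only: of_real_eq_iff)
      thus ?thesis unfolding sum_split2 m'_def using Suc by simp
    qed
  qed
  define V' where "V' = four_block_mat U (0\<^sub>m n n) (0\<^sub>m n n) V"
  have V'c: "V' \<in> carrier_mat (n + n) (n + n)" unfolding V'_def using u v by auto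
  have adjV': "adj V' = four_block_mat (adj U) (0\<^sub>m n n) (0\<^sub>m n n) (adj V)"
    unfolding V'_def by (rule eq_matI, insert u v, auto)
  have uV': "unitary (n + n) V'"
  proof (rule unitaryI[OF V'c])
    show "adj V' * V' = 1\<^sub>m (n + n)" unfolding adjV' unfolding V'_def using u v
      by (simp add: mult_four_block_mat[of _ n n _ n _ n _ _ n _ n])
  qed
  define B where "B = Z * V'"
  have Bblk: "B = four_block_mat (X * U) (Y * V) (0\<^sub>m n n) (0\<^sub>m n n)"
    unfolding B_def Z_def V'_def using X Y u v by (simp add: mult_four_block_mat[of _ n n _ n _ n _ _ n _ n])
  have adjB: "adj B = four_block_mat (adj (X * U)) (0\<^sub>m n n) (adj (Y * V)) (0\<^sub>m n n)"
    unfolding Bblk by (rule eq_matI, insert X Y u v, auto)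
  have BB: "adj B * B = four_block_mat (adj (X * U) * (X * U)) (adj (X * U) * (Y * V)) (adj (Y * V) * (X * U)) (adj (Y * V) * (Y * V))"
  proof -
    have c: "adj (X * U) * (X * U) \<in> carrier_mat n n" "adj (X * U) * (Y * V) \<in> carrier_mat n n"
      "adj (Y * V) * (X * U) \<in> carrier_mat n n" "adj (Y * V) * (Y * V) \<in> carrier_mat n n"
      using X Y u v by auto
    show ?thesis unfolding adjB unfolding Bblk using X Y u v c by (simp add: mult_four_block_mat[of _ n n _ n _ n _ _ n _ n])
  qed
  have XU: "adj (X * U) * (X * U) = real_diag n (\<lambda>i. (1/2) * r i)"
  proof -
    have "adj (X * U) * (X * U) = adj U * (X * X) * U" using X u ud by (simp add: adj_mult' mat_assoc)
    also have "\<dots> = real_diag n (\<lambda>i. (1/2) * r i)" unfolding XX using u ud unitary_cancel[OF U] by (simp add: mat_assoc)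
    finally show ?thesis .
  qed
  have YV: "adj (Y * V) * (Y * V) = real_diag n (\<lambda>i. (1/2) * s i)"
  proof -
    have "adj (Y * V) * (Y * V) = adj V * (Y * Y) * V" using Y v vd by (simp add: adj_mult' mat_assoc)
    also have "\<dots> = real_diag n (\<lambda>i. (1/2) * s i)" unfolding YY using v vd unitary_cancel[OF V] by (simp add: mat_assoc)
    finally show ?thesis .
  qed
  have HB: "adj V' * H * V' = adj B * B" unfolding H_def B_def using Zc V'c by (simp add: adj_mult' mat_assoc)
  have "(\<Sum>j<n + n. g (Re ((adj V' * H * V') $$ (j,j)))) \<le> (\<Sum>j<n + n. g (h j))"
    by (rule jensen_diag[OF Q uV' Hd g], insert h0, auto)
  also have "(\<Sum>j<n + n. g (Re ((adj V' * H * V') $$ (j,j)))) = (\<Sum>j<n. g (r j / 2)) + (\<Sum>j<n. g (s j / 2))"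
    unfolding HB BB sum_split2 using X Y u v by (simp add: XU YV)
  also have "(\<Sum>j<n + n. g (h j)) = (\<Sum>j<n. g (m j))" unfolding ps unfolding sum_split2 m'_def using g0 by simp
  finally show ?thesis .
qed


lemma abs_convex: "convex_on UNIV (\<lambda>x::real. \<bar>x\<bar>)"
proof (rule convex_onI)
  fix t x y :: real assume t: "0 < t" "t < 1"
  have "\<bar>(1 - t) *\<^sub>R x + t *\<^sub>R y\<bar> \<le> \<bar>(1 - t) * x\<bar> + \<bar>t * y\<bar>" by (simp add: abs_triangle_ineq)
  also have "\<dots> = (1 - t) * \<bar>x\<bar> + t * \<bar>y\<bar>" using t by (simp add: abs_mult)
  finally show "\<bar>(1 - t) *\<^sub>R x + t *\<^sub>R y\<bar> \<le> (1 - t) * \<bar>x\<bar> + t * \<bar>y\<bar>" .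
qed auto

lemma powr_tangent: fixes a b p :: real assumes a: "a \<ge> 1" and b: "b \<ge> 0" and p: "p \<ge> 0"
  shows "b powr a + a * b powr (a - 1) * (p - b) \<le> p powr a"
proof (cases "b = 0")
  case True thus ?thesis by simp
next
  case False
  hence b0: "b > 0" using b by auto
  show ?thesis
  proof (cases "p = 0")
    case True
    have "b powr (a - 1) * b = b powr a" using b0 by (simp add: powr_diff)
    hence "b powr a + a * b powr (a - 1) * (p - b) = (1 - a) * b powr a" using True by (simp add: algebra_simps)
    also have "\<dots> \<le> 0" using a by (simp add: mult_nonpos_nonneg)
    finally show ?thesis using True by simp
  next
    case False
    hence p0: "p > 0" using p by auto
    have "a * b powr (a - 1) * (p - b) \<le> p powr a - b powr a"
    proof (rule f''_imp_f'[where C = "{0<..}" and f = "\<lambda>x. x powr a" and f'' = "\<lambda>x. a * (a - 1) * x powr (a - 2)"])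
      fix x :: real assume x: "x \<in> {0<..}"
      show "((\<lambda>x. x powr a) has_real_derivative a * x powr (a - 1)) (at x)"
        using x by (auto intro!: derivative_eq_intros)
      show "((\<lambda>x. a * x powr (a - 1)) has_real_derivative a * (a - 1) * x powr (a - 2)) (at x)"
        using x by (auto intro!: derivative_eq_intros simp: algebra_simps)
      show "0 \<le> a * (a - 1) * x powr (a - 2)" using a by simp
    qed (insert b0 p0, auto)
    thus ?thesis by simp
  qed
qed

lemma conj_diff: assumes "A \<in> carrier_mat n n" "B \<in> carrier_mat n n" "V \<in> carrier_mat n n" "j < n"
  shows "(adj V * (A - B) * V) $$ (j,j) = (adj V * A * V) $$ (j,j) - (adj V * B * V) $$ (j,j)"
  unfolding conj_entry[OF minus_carrier_mat[OF assms(2)] assms(3,4,4)] conj_entry[OF assms(1) assms(3,4,4)]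
    conj_entry[OF assms(2) assms(3,4,4)]
  using assms by (simp add: sum_subtractf algebra_simps)

lemma mtrace_diag_sum: assumes "A \<in> carrier_mat n n" "unitary n V"
  shows "(\<Sum>j<n. Re ((adj V * A * V) $$ (j,j))) = Re (mtrace A)"
proof -
  have "mtrace (adj V * A * adj (adj V)) = mtrace A"
    by (rule mtrace_unitary_conj[OF unitary_adj[OF assms(2)] assms(1)])
  moreover have "mtrace (adj V * A * V) = (\<Sum>j<n. (adj V * A * V) $$ (j,j))"
    unfolding mtrace_def using assms unitaryD[OF assms(2)] by simp
  ultimately have "Re (\<Sum>j<n. (adj V * A * V) $$ (j,j)) = Re (mtrace A)" by simp
  thus ?thesis by (simp add: Re_sum)
qed

lemma lip_half: assumes a: "a \<ge> 1" and r1: "density n \<rho>1" and r2: "density n \<rho>2"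
  and U1: "unitary n U1" and d1: "\<rho>1 = U1 * real_diag n x * adj U1"
  and U2: "unitary n U2" and d2: "\<rho>2 = U2 * real_diag n y * adj U2"
  and W: "unitary n W" and dd: "\<rho>1 - \<rho>2 = W * real_diag n \<delta> * adj W"
  shows "(\<Sum>k<n. y k powr a) - (\<Sum>k<n. x k powr a) \<le> a / 2 * (\<Sum>k<n. \<bar>\<delta> k\<bar>)"
proof -
  have c1: "\<rho>1 \<in> carrier_mat n n" and c2: "\<rho>2 \<in> carrier_mat n n" and t1: "mtrace \<rho>1 = 1" and t2: "mtrace \<rho>2 = 1"
    using r1 r2 unfolding density_def by auto
  note u2 = unitaryD[OF U2]
  define p where "p = (\<lambda>k. Re ((adj U2 * \<rho>1 * U2) $$ (k,k)))"
  define e where "e = (\<lambda>k. Re ((adj U2 * (\<rho>1 - \<rho>2) * U2) $$ (k,k)))"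
  have yk: "k < n \<Longrightarrow> Re ((adj U2 * \<rho>2 * U2) $$ (k,k)) = y k" for k by (rule diag_conj_eig[OF U2 d2])
  have ek: "k < n \<Longrightarrow> e k = p k - y k" for k
    unfolding e_def p_def using conj_diff[OF c1 c2 u2(1), of k] yk[of k] by simp
  have p0: "k < n \<Longrightarrow> 0 \<le> p k" for k unfolding p_def by (rule density_diag_nonneg[OF r1 u2(1)])
  have y0: "k < n \<Longrightarrow> 0 \<le> y k" for k by (rule density_eig(1)[OF r2 U2 d2])
  have y1: "k < n \<Longrightarrow> y k \<le> 1" for k by (rule density_eig(3)[OF r2 U2 d2])
  have x0: "k < n \<Longrightarrow> 0 \<le> x k" for k by (rule density_eig(1)[OF r1 U1 d1])
  have sum_e: "(\<Sum>k<n. e k) = 0"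
  proof -
    have "(\<Sum>k<n. p k) = 1" unfolding p_def mtrace_diag_sum[OF c1 U2] t1 by simp
    moreover have "(\<Sum>k<n. y k) = 1" by (rule density_eig(2)[OF r2 U2 d2])
    ultimately show ?thesis by (simp add: ek sum_subtractf)
  qed
  have J1: "(\<Sum>k<n. p k powr a) \<le> (\<Sum>k<n. x k powr a)" unfolding p_def
    by (rule jensen_diag[OF U1 U2 d1 powr_convex0[OF a]], insert x0, auto)
  have J2: "(\<Sum>k<n. \<bar>e k\<bar>) \<le> (\<Sum>k<n. \<bar>\<delta> k\<bar>)" unfolding e_def
    by (rule jensen_diag[OF W U2 dd abs_convex], auto)
  define c where "c = (\<lambda>k. a * y k powr (a - 1))"
  have tang: "k < n \<Longrightarrow> y k powr a + c k * e k \<le> p k powr a" for k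
    unfolding c_def ek using powr_tangent[OF a y0 p0] by simp
  have cb: "k < n \<Longrightarrow> \<bar>c k - a / 2\<bar> \<le> a / 2" for k
  proof -
    assume k: "k < n"
    have "0 \<le> y k powr (a - 1)" by simp
    moreover have "y k powr (a - 1) \<le> 1" by (rule powr_le1, insert a y0[OF k] y1[OF k], auto)
    ultimately have "0 \<le> a * y k powr (a - 1)" "a * y k powr (a - 1) \<le> a * 1"
      using a by (auto intro: mult_left_mono)
    thus ?thesis unfolding c_def abs_le_iff by linarith
  qed
  have z: "(\<Sum>k<n. a / 2 * e k) = 0" unfolding sum_distrib_left[symmetric] sum_e by simp
  have "(\<Sum>k<n. c k * e k) = (\<Sum>k<n. (c k - a / 2) * e k)"
    unfolding left_diff_distrib sum_subtractf z by simp
  also have "\<dots> \<ge> - (\<Sum>k<n. a / 2 * \<bar>e k\<bar>)"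
  proof -
    have "\<bar>\<Sum>k<n. (c k - a / 2) * e k\<bar> \<le> (\<Sum>k<n. \<bar>(c k - a / 2) * e k\<bar>)" by (rule sum_abs)
    also have "\<dots> \<le> (\<Sum>k<n. a / 2 * \<bar>e k\<bar>)"
    proof (rule sum_mono)
      fix k assume "k \<in> {..<n}" hence k: "k < n" by simp
      show "\<bar>(c k - a / 2) * e k\<bar> \<le> a / 2 * \<bar>e k\<bar>"
        unfolding abs_mult by (rule mult_right_mono[OF cb[OF k]], simp)
    qed
    finally show ?thesis by linarith
  qed
  finally have ce: "- (a / 2 * (\<Sum>k<n. \<bar>e k\<bar>)) \<le> (\<Sum>k<n. c k * e k)" by (simp add: sum_distrib_left)
  have "(\<Sum>k<n. y k powr a) + (\<Sum>k<n. c k * e k) \<le> (\<Sum>k<n. p k powr a)"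
    using sum_mono[of "{..<n}" "\<lambda>k. y k powr a + c k * e k" "\<lambda>k. p k powr a"] tang by (simp add: sum.distrib)
  with ce J1 J2 a show ?thesis
    by (smt (verit) mult_left_mono divide_nonneg_nonneg)
qed

lemma decomp_neg: assumes W: "unitary n W" and A: "A \<in> carrier_mat n n" and B: "B \<in> carrier_mat n n"
  and dd: "A - B = W * real_diag n \<delta> * adj W"
  shows "B - A = W * real_diag n (\<lambda>i. (-1) * \<delta> i) * adj W"
  unfolding decomp_smult[OF W] dd[symmetric] by (rule eq_matI, insert A B, auto)

lemma lip_full: assumes a: "a \<ge> 1" and r1: "density n \<rho>1" and r2: "density n \<rho>2"
  and W: "unitary n W" and dd: "\<rho>1 - \<rho>2 = W * real_diag n \<delta> * adj W"
  shows "\<bar>tr_pow \<rho>1 a - tr_pow \<rho>2 a\<bar> \<le> a / 2 * (\<Sum>k<n. \<bar>\<delta> k\<bar>)"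
proof -
  have c1: "\<rho>1 \<in> carrier_mat n n" and c2: "\<rho>2 \<in> carrier_mat n n" using r1 r2 unfolding density_def by auto
  from r1 have "adj \<rho>1 = \<rho>1" unfolding density_def by auto
  from spectral[OF c1 this] obtain U1 x where U1: "unitary n U1" and d1: "\<rho>1 = U1 * real_diag n x * adj U1" by auto
  from r2 have "adj \<rho>2 = \<rho>2" unfolding density_def by auto
  from spectral[OF c2 this] obtain U2 y where U2: "unitary n U2" and d2: "\<rho>2 = U2 * real_diag n y * adj U2" by auto
  have A: "(\<Sum>k<n. y k powr a) - (\<Sum>k<n. x k powr a) \<le> a / 2 * (\<Sum>k<n. \<bar>\<delta> k\<bar>)"
    by (rule lip_half[OF a r1 r2 U1 d1 U2 d2 W dd])
  have B: "(\<Sum>k<n. x k powr a) - (\<Sum>k<n. y k powr a) \<le> a / 2 * (\<Sum>k<n. \<bar>(-1) * \<delta> k\<bar>)"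
    by (rule lip_half[OF a r2 r1 U2 d2 U1 d1 W decomp_neg[OF W c1 c2 dd]])
  have B': "(\<Sum>k<n. x k powr a) - (\<Sum>k<n. y k powr a) \<le> a / 2 * (\<Sum>k<n. \<bar>\<delta> k\<bar>)" using B by simp
  show ?thesis unfolding tr_pow_decomp[OF U1 d1] tr_pow_decomp[OF U2 d2] abs_le_iff using A B' by linarith
qed


lemma kron_carrier: "A \<in> carrier_mat n n' \<Longrightarrow> B \<in> carrier_mat m m' \<Longrightarrow> kron A B \<in> carrier_mat (n * m) (n' * m')"
  unfolding kron_def by auto

lemma kron_dims[simp]: "dim_row (kron A B) = dim_row A * dim_row B" "dim_col (kron A B) = dim_col A * dim_col B"
  unfolding kron_def by auto

lemma kron_index: "i < dim_row A * dim_row B \<Longrightarrow> j < dim_col A * dim_col B \<Longrightarrow>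
  kron A B $$ (i,j) = A $$ (i div dim_row B, j div dim_col B) * B $$ (i mod dim_row B, j mod dim_col B)"
  unfolding kron_def by auto

lemma div_mod_lt: "l < n * m \<Longrightarrow> l div m < n \<and> l mod m < (m::nat)"
  by (metis less_mult_imp_div_less mod_less_divisor mult_0_right neq0_conv not_less_zero mult.commute)

lemma sum_prod_reindex: "(\<Sum>l<n * m. f (l div m) (l mod m)) = (\<Sum>p<n. \<Sum>q<(m::nat). f p q)"
proof (cases "m = 0")
  case True thus ?thesis by simp
next
  case False
  show ?thesis
  proof (induction n)
    case 0 thus ?case by simp
  next
    case (Suc n)
    have "(\<Sum>l<Suc n * m. f (l div m) (l mod m)) = (\<Sum>l<n * m + m. f (l div m) (l mod m))"
      by (simp add: add.commute)
    also have "\<dots> = (\<Sum>l<n * m. f (l div m) (l mod m)) + (\<Sum>q<m. f ((n * m + q) div m) ((n * m + q) mod m))"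
      by (rule sum_split2)
    also have "(\<Sum>q<m. f ((n * m + q) div m) ((n * m + q) mod m)) = (\<Sum>q<m. f n q)"
      by (rule sum.cong, insert False, auto)
    finally show ?case using Suc by simp
  qed
qed

lemma kron_mult: assumes A: "A \<in> carrier_mat n n" "C \<in> carrier_mat n n" and B: "B \<in> carrier_mat m m" "D \<in> carrier_mat m m"
  shows "kron A B * kron C D = kron (A * C) (B * D)"
proof (rule eq_matI)
  fix i j assume "i < dim_row (kron (A * C) (B * D))" "j < dim_col (kron (A * C) (B * D))"
  hence i: "i < n * m" and j: "j < n * m" using A B by auto
  from div_mod_lt[OF i] div_mod_lt[OF j] have ij: "i div m < n" "i mod m < m" "j div m < n" "j mod m < m" by auto
  have "(kron A B * kron C D) $$ (i,j) = (\<Sum>l<n * m. kron A B $$ (i,l) * kron C D $$ (l,j))"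
    by (rule mult_index_sum, insert i j A B, auto intro: kron_carrier)
  also have "\<dots> = (\<Sum>l<n * m. (\<lambda>p q. A $$ (i div m, p) * B $$ (i mod m, q) * (C $$ (p, j div m) * D $$ (q, j mod m))) (l div m) (l mod m))"
    by (rule sum.cong[OF refl], insert i j A B, auto simp: kron_index dest: div_mod_lt)
  also have "\<dots> = (\<Sum>p<n. \<Sum>q<m. A $$ (i div m, p) * B $$ (i mod m, q) * (C $$ (p, j div m) * D $$ (q, j mod m)))"
    by (rule sum_prod_reindex)
  also have "\<dots> = (\<Sum>p<n. A $$ (i div m, p) * C $$ (p, j div m)) * (\<Sum>q<m. B $$ (i mod m, q) * D $$ (q, j mod m))"
    by (simp add: sum_product mult_ac)
  also have "\<dots> = (A * C) $$ (i div m, j div m) * (B * D) $$ (i mod m, j mod m)"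
  proof -
    have "(A * C) $$ (i div m, j div m) = (\<Sum>p<n. A $$ (i div m, p) * C $$ (p, j div m))"
      by (rule mult_index_sum, insert ij A, auto)
    moreover have "(B * D) $$ (i mod m, j mod m) = (\<Sum>q<m. B $$ (i mod m, q) * D $$ (q, j mod m))"
      by (rule mult_index_sum, insert ij B, auto)
    ultimately show ?thesis by simp
  qed
  also have "\<dots> = kron (A * C) (B * D) $$ (i,j)" using i j A B by (simp add: kron_index)
  finally show "(kron A B * kron C D) $$ (i,j) = kron (A * C) (B * D) $$ (i,j)" .
qed (insert A B, auto)

lemma adj_kron: "adj (kron A B) = kron (adj A) (adj B)"
proof (rule eq_matI)
  fix i j assume "i < dim_row (kron (adj A) (adj B))" "j < dim_col (kron (adj A) (adj B))"
  hence i: "i < dim_col A * dim_col B" and j: "j < dim_row A * dim_row B" by auto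
  show "adj (kron A B) $$ (i,j) = kron (adj A) (adj B) $$ (i,j)"
    using i j div_mod_lt[OF i] div_mod_lt[OF j] by (simp add: kron_index)
qed auto

lemma divmod_eq_iff: "(m::nat) > 0 \<Longrightarrow> (i div m = j div m \<and> i mod m = j mod m) \<longleftrightarrow> i = j"
  by (metis div_mult_mod_eq)

lemma kron_real_diag: "kron (real_diag n d) (real_diag m e) = real_diag (n * m) (\<lambda>l. d (l div m) * e (l mod m))"
proof (rule eq_matI)
  fix i j assume "i < dim_row (real_diag (n * m) (\<lambda>l. d (l div m) * e (l mod m)))"
    "j < dim_col (real_diag (n * m) (\<lambda>l. d (l div m) * e (l mod m)))"
  hence i: "i < n * m" and j: "j < n * m" by auto
  hence m: "m > 0" by (cases m, auto)
  show "kron (real_diag n d) (real_diag m e) $$ (i,j) = real_diag (n * m) (\<lambda>l. d (l div m) * e (l mod m)) $$ (i,j)"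
    using i j div_mod_lt[OF i] div_mod_lt[OF j] divmod_eq_iff[OF m, of i j] by (auto simp: kron_index)
qed auto

lemma kron_one: "kron (1\<^sub>m n) (1\<^sub>m m) = 1\<^sub>m (n * m)"
proof -
  have "kron (real_diag n (\<lambda>_. 1)) (real_diag m (\<lambda>_. 1)) = real_diag (n * m) (\<lambda>_. 1)"
    using kron_real_diag[of n "\<lambda>_. 1" m "\<lambda>_. 1"] by simp
  moreover have "\<And>k. real_diag k (\<lambda>_. 1) = 1\<^sub>m k" by (rule eq_matI, auto)
  ultimately show ?thesis by simp
qed

lemma unitary_kron: assumes U: "unitary n U" and V: "unitary m V" shows "unitary (n * m) (kron U V)"
proof (rule unitaryI)
  note u = unitaryD[OF U] and v = unitaryD[OF V]
  show "kron U V \<in> carrier_mat (n * m) (n * m)" by (rule kron_carrier[OF u(1) v(1)])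
  show "adj (kron U V) * kron U V = 1\<^sub>m (n * m)"
    unfolding adj_kron kron_mult[OF u(2) u(1) v(2) v(1)] u v kron_one ..
qed

lemma kron_decomp: assumes U: "unitary n U" and V: "unitary m V"
  shows "kron (U * real_diag n d * adj U) (V * real_diag m e * adj V) =
    kron U V * real_diag (n * m) (\<lambda>l. d (l div m) * e (l mod m)) * adj (kron U V)"
proof -
  note u = unitaryD[OF U] and v = unitaryD[OF V]
  have "kron (U * real_diag n d * adj U) (V * real_diag m e * adj V) = kron (U * real_diag n d) (V * real_diag m e) * kron (adj U) (adj V)"
    by (rule kron_mult[symmetric], insert u v, auto)
  also have "kron (U * real_diag n d) (V * real_diag m e) = kron U V * kron (real_diag n d) (real_diag m e)"
    by (rule kron_mult[symmetric], insert u v, auto)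
  finally show ?thesis unfolding kron_real_diag adj_kron .
qed

lemma tr_pow_kron: assumes r: "density n \<rho>" and t: "density m \<tau>" and a: "a > 0"
  shows "tr_pow (kron \<rho> \<tau>) a = tr_pow \<rho> a * tr_pow \<tau> a"
proof -
  from density_decomp[OF r] obtain U d where U: "unitary n U" and rd: "\<rho> = U * real_diag n d * adj U"
    and d0: "\<forall>i<n. 0 \<le> d i" by auto
  from density_decomp[OF t] obtain V e where V: "unitary m V" and td: "\<tau> = V * real_diag m e * adj V"
    and e0: "\<forall>i<m. 0 \<le> e i" by auto
  have "tr_pow (kron \<rho> \<tau>) a = (\<Sum>l<n * m. (d (l div m) * e (l mod m)) powr a)"
    by (rule tr_pow_decomp[OF unitary_kron[OF U V]], unfold rd td, rule kron_decomp[OF U V])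
  also have "\<dots> = (\<Sum>l<n * m. (\<lambda>p q. d p powr a * e q powr a) (l div m) (l mod m))"
    by (simp add: powr_mult)
  also have "\<dots> = (\<Sum>p<n. \<Sum>q<m. d p powr a * e q powr a)" by (rule sum_prod_reindex)
  also have "\<dots> = (\<Sum>p<n. d p powr a) * (\<Sum>q<m. e q powr a)" by (simp add: sum_product)
  also have "\<dots> = tr_pow \<rho> a * tr_pow \<tau> a" unfolding tr_pow_decomp[OF U rd] tr_pow_decomp[OF V td] ..
  finally show ?thesis .
qed

lemma mix_kron: assumes r: "\<rho> \<in> carrier_mat n n" and s: "\<sigma> \<in> carrier_mat n n" and t: "\<tau> \<in> carrier_mat m m"
  shows "mix (kron \<rho> \<tau>) (kron \<sigma> \<tau>) = kron (mix \<rho> \<sigma>) \<tau>"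
proof (rule eq_matI)
  fix i j assume "i < dim_row (kron (mix \<rho> \<sigma>) \<tau>)" "j < dim_col (kron (mix \<rho> \<sigma>) \<tau>)"
  hence i: "i < n * m" and j: "j < n * m" using mix_carrier[OF r s] t by auto
  have md: "dim_row (mix \<rho> \<sigma>) = n" "dim_col (mix \<rho> \<sigma>) = n" using mix_carrier[OF r s] by auto
  have kc: "kron \<rho> \<tau> \<in> carrier_mat (n * m) (n * m)" "kron \<sigma> \<tau> \<in> carrier_mat (n * m) (n * m)"
    using r s t by (auto intro: kron_carrier)
  show "mix (kron \<rho> \<tau>) (kron \<sigma> \<tau>) $$ (i,j) = kron (mix \<rho> \<sigma>) \<tau> $$ (i,j)"
    unfolding mix_index[OF kc i j] using i j r s t div_mod_lt[OF i] div_mod_lt[OF j]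
    by (simp add: kron_index mix_index[OF r s] md add_divide_distrib algebra_simps)
qed (insert r s t mix_carrier[OF r s], auto simp: mix_def)


lemma tr_pow_unitary: assumes r: "density n \<rho>" and U: "unitary n U"
  shows "tr_pow (U * \<rho> * adj U) a = tr_pow \<rho> a"
proof -
  from density_decomp[OF r] obtain V d where V: "unitary n V" and rd: "\<rho> = V * real_diag n d * adj V" by auto
  note u = unitaryD[OF U] and v = unitaryD[OF V]
  have "U * \<rho> * adj U = (U * V) * real_diag n d * adj (U * V)"
    unfolding rd using unitary_dims[OF U] unitary_dims[OF V] by (simp add: adj_mult' mat_assoc)
  thus ?thesis using tr_pow_decomp[OF unitary_mult[OF U V]] tr_pow_decomp[OF V rd] by simp
qed

lemma mix_unitary: assumes r: "\<rho> \<in> carrier_mat n n" and s: "\<sigma> \<in> carrier_mat n n" and U: "unitary n U"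
  shows "mix (U * \<rho> * adj U) (U * \<sigma> * adj U) = U * mix \<rho> \<sigma> * adj U"
proof -
  note u = unitaryD[OF U]
  have "U * mix \<rho> \<sigma> * adj U = ((1/2) \<cdot>\<^sub>m (U * (\<rho> + \<sigma>))) * adj U"
    unfolding mix_def by (subst mult_smult_distrib[of _ n n], insert r s u, auto)
  also have "\<dots> = (1/2) \<cdot>\<^sub>m (U * (\<rho> + \<sigma>) * adj U)"
    by (rule mult_smult_assoc_mat[of _ n n], insert r s u, auto)
  also have "U * (\<rho> + \<sigma>) = U * \<rho> + U * \<sigma>" by (rule mult_add_distrib_mat[of _ n n], insert r s u, auto)
  also have "(U * \<rho> + U * \<sigma>) * adj U = U * \<rho> * adj U + U * \<sigma> * adj U"
    by (rule add_mult_distrib_mat[of _ n n], insert r s u, auto)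
  finally show ?thesis unfolding mix_def by simp
qed

lemma tr_pow_pure: assumes p: "pure_state m \<tau>" and t: "density m \<tau>" and a: "a > 0"
  shows "tr_pow \<tau> a = 1"
proof -
  from p obtain v where v: "v \<in> carrier_vec m" and nv: "scalar_prod (map_vec cnj v) v = 1"
    and tv: "\<tau> = mat m m (\<lambda>(i,j). v $ i * cnj (v $ j))" unfolding pure_state_def by auto
  have tc: "\<tau> \<in> carrier_mat m m" unfolding tv by auto
  have nv': "(\<Sum>k<m. cnj (v $ k) * v $ k) = 1" using nv v by (simp add: scalar_prod_def lessThan_atLeast0)
  have idem: "\<tau> * \<tau> = \<tau>"
  proof (rule eq_matI)
    fix i j assume "i < dim_row \<tau>" "j < dim_col \<tau>"
    hence i: "i < m" and j: "j < m" using tc by auto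
    have "(\<tau> * \<tau>) $$ (i,j) = (\<Sum>k<m. \<tau> $$ (i,k) * \<tau> $$ (k,j))" by (rule mult_index_sum, insert tc i j, auto)
    also have "\<dots> = (\<Sum>k<m. v $ i * cnj (v $ j) * (cnj (v $ k) * v $ k))"
      by (rule sum.cong, insert i j, auto simp: tv mult_ac)
    also have "\<dots> = v $ i * cnj (v $ j)" unfolding sum_distrib_left[symmetric] nv' by simp
    finally show "(\<tau> * \<tau>) $$ (i,j) = \<tau> $$ (i,j)" using i j unfolding tv by simp
  qed (insert tc, auto)
  from density_decomp[OF t] obtain U d where U: "unitary m U" and td: "\<tau> = U * real_diag m d * adj U"
    and d0: "\<forall>i<m. 0 \<le> d i" and ds: "(\<Sum>i<m. d i) = 1" by auto
  note u = unitaryD[OF U] and ud = unitary_dims[OF U]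
  have "real_diag m (\<lambda>i. d i * d i) = adj U * (\<tau> * \<tau>) * U"
    unfolding td using u ud unitary_cancel[OF U] by (simp add: mat_assoc real_diag_mult[symmetric])
  also have "\<dots> = real_diag m d" unfolding idem unfolding td using u ud unitary_cancel[OF U] by (simp add: mat_assoc)
  finally have dd: "real_diag m (\<lambda>i. d i * d i) = real_diag m d" .
  have d01: "d i = 0 \<or> d i = 1" if i: "i < m" for i
  proof -
    from arg_cong[OF dd, of "\<lambda>A. A $$ (i,i)"] i have "d i * d i = d i" by simp
    thus ?thesis by (metis mult_cancel_right1 mult_eq_0_iff)
  qed
  have "tr_pow \<tau> a = (\<Sum>i<m. d i powr a)" by (rule tr_pow_decomp[OF U td])
  also have "\<dots> = (\<Sum>i<m. d i)"
  proof (rule sum.cong[OF refl])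
    fix i assume "i \<in> {..<m}"
    hence "d i = 0 \<or> d i = 1" using d01 by auto
    thus "d i powr a = d i" by auto
  qed
  finally show ?thesis using ds by simp
qed

lemma tr_pow_pos: assumes r: "density n \<rho>" and a: "a > 0"
  shows "0 < tr_pow \<rho> a"
proof -
  from density_decomp[OF r] obtain U d where U: "unitary n U" and rd: "\<rho> = U * real_diag n d * adj U"
    and d0: "\<forall>i<n. 0 \<le> d i" and ds: "(\<Sum>i<n. d i) = 1" by auto
  obtain i where i: "i < n" "d i \<noteq> 0" using ds by (metis sum.neutral lessThan_iff zero_neq_one)
  have "0 < d i powr a" using i by simp
  also have "\<dots> \<le> (\<Sum>i<n. d i powr a)" by (rule member_le_sum, insert i, auto)
  finally show ?thesis unfolding tr_pow_decomp[OF U rd] .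
qed

lemma tr_pow_le1: assumes r: "density n \<rho>" and a: "a \<ge> 1"
  shows "tr_pow \<rho> a \<le> 1"
proof -
  from density_decomp[OF r] obtain U d where U: "unitary n U" and rd: "\<rho> = U * real_diag n d * adj U"
    and d0: "\<forall>i<n. 0 \<le> d i" and ds: "(\<Sum>i<n. d i) = 1" by auto
  have d1: "i < n \<Longrightarrow> d i \<le> 1" for i using density_eig(3)[OF r U rd] .
  have "(\<Sum>i<n. d i powr a) \<le> (\<Sum>i<n. d i)"
  proof (rule sum_mono)
    fix i assume "i \<in> {..<n}" hence i: "i < n" by simp
    show "d i powr a \<le> d i" using powr_mono'[of 1 a "d i"] d0 d1[OF i] a i by simp
  qed
  thus ?thesis unfolding tr_pow_decomp[OF U rd] ds .
qed

lemma tr_pow_ge1: assumes r: "density n \<rho>" and a: "0 < a" "a \<le> 1"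
  shows "1 \<le> tr_pow \<rho> a"
proof -
  from density_decomp[OF r] obtain U d where U: "unitary n U" and rd: "\<rho> = U * real_diag n d * adj U"
    and d0: "\<forall>i<n. 0 \<le> d i" and ds: "(\<Sum>i<n. d i) = 1" by auto
  have d1: "i < n \<Longrightarrow> d i \<le> 1" for i using density_eig(3)[OF r U rd] .
  have "(\<Sum>i<n. d i) \<le> (\<Sum>i<n. d i powr a)"
  proof (rule sum_mono)
    fix i assume "i \<in> {..<n}" hence i: "i < n" by simp
    show "d i \<le> d i powr a" using powr_mono'[of a 1 "d i"] d0 d1[OF i] a i by simp
  qed
  thus ?thesis unfolding tr_pow_decomp[OF U rd] ds .
qed


lemma density_herm: "density n \<rho> \<Longrightarrow> \<rho> \<in> carrier_mat n n \<and> adj \<rho> = \<rho>"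
  unfolding density_def by auto

lemma trpow_mid_convex: assumes r: "density n \<rho>" and s: "density n \<sigma>" and a: "a \<ge> 1"
  shows "tr_pow (mix \<rho> \<sigma>) a \<le> (tr_pow \<rho> a + tr_pow \<sigma> a) / 2"
proof -
  from density_decomp[OF r] obtain U x where U: "unitary n U" and rd: "\<rho> = U * real_diag n x * adj U" by auto
  from density_decomp[OF s] obtain V y where V: "unitary n V" and sd: "\<sigma> = V * real_diag n y * adj V" by auto
  from density_decomp[OF mix_density[OF r s]] obtain W z where W: "unitary n W" and md: "mix \<rho> \<sigma> = W * real_diag n z * adj W" by auto
  from mid_convex[OF r s U rd V sd W md powr_convex0[OF a]]
  show ?thesis unfolding tr_pow_decomp[OF U rd] tr_pow_decomp[OF V sd] tr_pow_decomp[OF W md] .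
qed

lemma trpow_mid_concave: assumes r: "density n \<rho>" and s: "density n \<sigma>" and a: "0 < a" "a \<le> 1"
  shows "(tr_pow \<rho> a + tr_pow \<sigma> a) / 2 \<le> tr_pow (mix \<rho> \<sigma>) a"
proof -
  from density_decomp[OF r] obtain U x where U: "unitary n U" and rd: "\<rho> = U * real_diag n x * adj U" by auto
  from density_decomp[OF s] obtain V y where V: "unitary n V" and sd: "\<sigma> = V * real_diag n y * adj V" by auto
  from density_decomp[OF mix_density[OF r s]] obtain W z where W: "unitary n W" and md: "mix \<rho> \<sigma> = W * real_diag n z * adj W" by auto
  from mid_convex[OF r s U rd V sd W md powr_concave0[OF a]]
  have "(\<Sum>j<n. - (z j powr a)) \<le> ((\<Sum>k<n. - (x k powr a)) + (\<Sum>k<n. - (y k powr a))) / 2" .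
  hence "- (\<Sum>j<n. z j powr a) \<le> (- (\<Sum>k<n. x k powr a) - (\<Sum>k<n. y k powr a)) / 2"
    by (simp add: sum_negf)
  thus ?thesis unfolding tr_pow_decomp[OF U rd] tr_pow_decomp[OF V sd] tr_pow_decomp[OF W md] by simp
qed

lemma trpow_super: assumes r: "density n \<rho>" and s: "density n \<sigma>" and a: "a \<ge> 1"
  shows "2 powr (- a) * (tr_pow \<rho> a + tr_pow \<sigma> a) \<le> tr_pow (mix \<rho> \<sigma>) a"
proof -
  from density_decomp[OF r] obtain U x where U: "unitary n U" and rd: "\<rho> = U * real_diag n x * adj U"
    and x0: "\<forall>i<n. 0 \<le> x i" by auto
  from density_decomp[OF s] obtain V y where V: "unitary n V" and sd: "\<sigma> = V * real_diag n y * adj V"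
    and y0: "\<forall>i<n. 0 \<le> y i" by auto
  from density_decomp[OF mix_density[OF r s]] obtain W z where W: "unitary n W" and md: "mix \<rho> \<sigma> = W * real_diag n z * adj W" by auto
  from superadd[OF r s U rd V sd W md, of "\<lambda>t. t powr a"] powr_convex0[OF a]
  have "(\<Sum>j<n. (x j / 2) powr a) + (\<Sum>j<n. (y j / 2) powr a) \<le> (\<Sum>j<n. z j powr a)" by simp
  moreover have "(\<Sum>j<n. (x j / 2) powr a) = 2 powr (- a) * (\<Sum>j<n. x j powr a)"
    unfolding sum_distrib_left by (rule sum.cong, insert x0, auto simp: powr_divide powr_minus_divide)
  moreover have "(\<Sum>j<n. (y j / 2) powr a) = 2 powr (- a) * (\<Sum>j<n. y j powr a)"
    unfolding sum_distrib_left by (rule sum.cong, insert y0, auto simp: powr_divide powr_minus_divide)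
  ultimately show ?thesis unfolding tr_pow_decomp[OF U rd] tr_pow_decomp[OF V sd] tr_pow_decomp[OF W md]
    by (simp add: distrib_left)
qed

lemma trpow_lip: assumes r1: "density n \<rho>1" and r2: "density n \<rho>2" and s: "density n \<sigma>" and a: "a \<ge> 1"
  shows "\<bar>tr_pow \<rho>1 a - tr_pow \<rho>2 a\<bar> \<le> a * trace_norm (\<rho>1 - \<rho>2)"
    and "\<bar>tr_pow (mix \<rho>1 \<sigma>) a - tr_pow (mix \<rho>2 \<sigma>) a\<bar> \<le> a / 2 * trace_norm (\<rho>1 - \<rho>2)"
proof -
  have c1: "\<rho>1 \<in> carrier_mat n n" and c2: "\<rho>2 \<in> carrier_mat n n" and cs: "\<sigma> \<in> carrier_mat n n"
    using r1 r2 s unfolding density_def by auto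
  have "adj (\<rho>1 - \<rho>2) = \<rho>1 - \<rho>2" using r1 r2 c1 c2 unfolding density_def by (simp add: adj_minus)
  from spectral[OF minus_carrier_mat[OF c2] this] obtain W d where W: "unitary n W"
    and dd: "\<rho>1 - \<rho>2 = W * real_diag n d * adj W" by auto
  have tn: "trace_norm (\<rho>1 - \<rho>2) = 1/2 * (\<Sum>k<n. \<bar>d k\<bar>)" by (rule trace_norm_decomp[OF W dd])
  show "\<bar>tr_pow \<rho>1 a - tr_pow \<rho>2 a\<bar> \<le> a * trace_norm (\<rho>1 - \<rho>2)"
    using lip_full[OF a r1 r2 W dd] unfolding tn by simp
  have md: "mix \<rho>1 \<sigma> - mix \<rho>2 \<sigma> = W * real_diag n (\<lambda>i. (1/2) * d i) * adj W"
    unfolding decomp_smult[OF W] dd[symmetric] mix_def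
    by (rule eq_matI, insert c1 c2 cs, auto simp: algebra_simps)
  have "\<bar>tr_pow (mix \<rho>1 \<sigma>) a - tr_pow (mix \<rho>2 \<sigma>) a\<bar> \<le> a / 2 * (\<Sum>k<n. \<bar>(1/2) * d k\<bar>)"
    by (rule lip_full[OF a mix_density[OF r1 s] mix_density[OF r2 s] W md])
  thus "\<bar>tr_pow (mix \<rho>1 \<sigma>) a - tr_pow (mix \<rho>2 \<sigma>) a\<bar> \<le> a / 2 * trace_norm (\<rho>1 - \<rho>2)"
    unfolding tn by (simp add: sum_distrib_left[symmetric] abs_mult sum_divide_distrib[symmetric])
qed

lemma mix_comm: assumes "\<rho> \<in> carrier_mat n n" "\<sigma> \<in> carrier_mat n n" shows "mix \<rho> \<sigma> = mix \<sigma> \<rho>"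
  unfolding mix_def using comm_add_mat[OF assms] by simp

lemma J_aux: "k * (M - 1) - k * (A - 1) / 2 - k * (B - 1) / 2 = k * (M - A / 2 - B / 2)" for k M A B :: real
  by (simp add: field_simps)

lemma J_alt: "J_ab a b \<rho> \<sigma> = 1 / ((1 - a) * b) * (tr_pow (mix \<rho> \<sigma>) a powr b - tr_pow \<rho> a powr b / 2 - tr_pow \<sigma> a powr b / 2)"
  unfolding J_ab_def S_ab_def mix_def by (rule J_aux)


lemma powr_convex_neg: assumes p: "p < 0" shows "convex_on {0<..} (\<lambda>x::real. x powr p)"
proof (rule f''_ge0_imp_convex[where f' = "\<lambda>x. p * x powr (p - 1)" and f'' = "\<lambda>x. p * (p - 1) * x powr (p - 2)"])
  fix x :: real assume x: "x \<in> {0<..}"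
  show "((\<lambda>x. x powr p) has_real_derivative p * x powr (p - 1)) (at x)"
    using x by (auto intro!: derivative_eq_intros)
  show "((\<lambda>x. p * x powr (p - 1)) has_real_derivative p * (p - 1) * x powr (p - 2)) (at x)"
    using x by (auto intro!: derivative_eq_intros simp: algebra_simps)
  have "0 \<le> p * (p - 1)" using p by (simp add: mult_nonpos_nonpos)
  thus "0 \<le> p * (p - 1) * x powr (p - 2)" by simp
qed auto

lemma mid_le: fixes f :: "real \<Rightarrow> real" assumes "convex_on C f" "x \<in> C" "y \<in> C" shows "f ((x + y) / 2) \<le> (f x + f y) / 2"
proof -
  have "f ((1 - 1/2) *\<^sub>R x + (1/2) *\<^sub>R y) \<le> (1 - 1/2) * f x + (1/2) * f y"
    by (rule convex_onD[OF assms(1)], insert assms, auto)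
  thus ?thesis by (simp add: add_divide_distrib)
qed

lemma lowerA: fixes al be a b mm :: real
  assumes al: "0 < al" "al < 1" and be: "be < 0 \<or> (0 < be \<and> be < 1)"
    and pos: "0 < a" "0 < b" and m: "(a + b) / 2 \<le> mm"
  shows "0 \<le> 1 / ((1 - al) * be) * (mm powr be - a powr be / 2 - b powr be / 2)"
  using be
proof
  assume be: "be < 0"
  have k: "1 / ((1 - al) * be) < 0" using al be by (simp add: divide_neg_pos mult_pos_neg)
  have "mm powr be \<le> ((a + b) / 2) powr be" by (rule powr_mono2'[OF _ _ m], insert be pos, auto)
  also have "\<dots> \<le> (a powr be + b powr be) / 2" by (rule mid_le[OF powr_convex_neg[OF be]], insert pos, auto)
  finally have inner: "mm powr be - a powr be / 2 - b powr be / 2 \<le> 0" by simp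
  show ?thesis by (rule mult_nonpos_nonpos[OF less_imp_le[OF k] inner])
next
  assume be: "0 < be \<and> be < 1"
  have k: "0 < 1 / ((1 - al) * be)" using al be by simp
  have "(a powr be + b powr be) / 2 \<le> ((a + b) / 2) powr be"
    using mid_le[OF powr_concave0[of be], of a b] be pos by auto
  also have "\<dots> \<le> mm powr be" by (rule powr_mono2, insert be pos m, auto)
  finally have "0 \<le> mm powr be - a powr be / 2 - b powr be / 2" by simp
  with k show ?thesis by simp
qed

lemma lowerB: fixes al be a b mm :: real
  assumes al: "1 < al" and be: "1 \<le> be"
    and pos: "0 < a" "0 < b" "0 < mm" and m: "mm \<le> (a + b) / 2"
  shows "0 \<le> 1 / ((1 - al) * be) * (mm powr be - a powr be / 2 - b powr be / 2)"
proof -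
  have k: "1 / ((1 - al) * be) < 0" using al be by (simp add: divide_neg_pos mult_neg_pos)
  have "mm powr be \<le> ((a + b) / 2) powr be" by (rule powr_mono2, insert be pos m, auto)
  also have "\<dots> \<le> (a powr be + b powr be) / 2" using mid_le[OF powr_convex0[OF be], of a b] pos by auto
  finally have inner: "mm powr be - a powr be / 2 - b powr be / 2 \<le> 0" by simp
  show ?thesis by (rule mult_nonpos_nonpos[OF less_imp_le[OF k] inner])
qed

lemma powr_superadd: fixes a b p :: real assumes "0 \<le> a" "0 \<le> b" "1 \<le> p"
  shows "a powr p + b powr p \<le> (a + b) powr p"
proof (cases "a + b = 0")
  case True hence "a = 0" "b = 0" using assms by auto
  thus ?thesis by simp
next
  case False
  have "a powr p = a * a powr (p - 1)" using assms by (cases "a = 0", auto simp: powr_diff)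
  also have "\<dots> \<le> a * (a + b) powr (p - 1)" by (rule mult_left_mono, rule powr_mono2, insert assms, auto)
  finally have A: "a powr p \<le> a * (a + b) powr (p - 1)" .
  have "b powr p = b * b powr (p - 1)" using assms by (cases "b = 0", auto simp: powr_diff)
  also have "\<dots> \<le> b * (a + b) powr (p - 1)" by (rule mult_left_mono, rule powr_mono2, insert assms, auto)
  finally have B: "b powr p \<le> b * (a + b) powr (p - 1)" .
  have "(a + b) * (a + b) powr (p - 1) = (a + b) powr p" using False assms by (simp add: powr_diff)
  with A B show ?thesis by (simp add: distrib_right)
qed

lemma upperB: fixes al be a b mm :: real
  assumes al: "1 < al" and be: "1 \<le> be"
    and pos: "0 < a" "a \<le> 1" "0 < b" "b \<le> 1" and m: "2 powr (- al) * (a + b) \<le> mm"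
  shows "1 / ((1 - al) * be) * (mm powr be - a powr be / 2 - b powr be / 2) \<le> 1 / ((1 - al) * be) * (2 powr (1 - al * be) - 1)"
proof -
  have k: "1 / ((1 - al) * be) \<le> 0" using al be by (simp add: divide_nonpos_pos mult_nonpos_nonneg)
  define q where "q = 2 powr (- (al * be))"
  have "(2 powr (- al) * (a + b)) powr be \<le> mm powr be" by (rule powr_mono2, insert be pos m, auto)
  moreover have "(2 powr (- al) * (a + b)) powr be = q * (a + b) powr be"
    unfolding q_def using pos by (simp add: powr_mult powr_powr)
  ultimately have m1: "q * (a + b) powr be \<le> mm powr be" by simp
  have q0: "0 \<le> q" unfolding q_def by simp
  have "q * (a powr be + b powr be) \<le> q * (a + b) powr be"
    by (rule mult_left_mono[OF powr_superadd q0], insert pos be, auto)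
  with m1 have m2: "q * (a powr be + b powr be) \<le> mm powr be" by simp
  have qh: "q \<le> 1 / 2"
  proof -
    have "1 * 1 \<le> al * be" by (rule mult_mono, insert al be, auto)
    hence "q \<le> 2 powr (-1)" unfolding q_def by (intro powr_mono, auto)
    thus ?thesis by (simp add: powr_minus)
  qed
  have ab2: "a powr be + b powr be \<le> 2" using powr_le1[of be a] powr_le1[of be b] be pos by auto
  have "(q - 1/2) * 2 \<le> (q - 1/2) * (a powr be + b powr be)"
    by (rule mult_left_mono_neg[OF ab2], insert qh, auto)
  hence "2 * q - 1 \<le> mm powr be - a powr be / 2 - b powr be / 2" using m2 by (simp add: algebra_simps)
  moreover have "2 powr (1 - al * be) = 2 * q" unfolding q_def by (simp add: powr_diff powr_minus divide_inverse)
  ultimately have "2 powr (1 - al * be) - 1 \<le> mm powr be - a powr be / 2 - b powr be / 2" by simp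
  thus ?thesis by (rule mult_left_mono_neg[OF _ k])
qed

lemma tensor_scalar: fixes al be a b mm y :: real
  assumes c: "(1 - al) * be \<noteq> 0" and pos: "0 \<le> a" "0 \<le> b" "0 \<le> mm" "0 \<le> y"
  shows "1 / ((1 - al) * be) * ((mm * y) powr be - (a * y) powr be / 2 - (b * y) powr be / 2) =
    (1 + (1 - al) * be * (1 / ((1 - al) * be) * (y powr be - 1))) * (1 / ((1 - al) * be) * (mm powr be - a powr be / 2 - b powr be / 2))"
proof -
  have "1 + (1 - al) * be * (1 / ((1 - al) * be) * (y powr be - 1)) = y powr be" using c by simp
  thus ?thesis using pos by (simp add: powr_mult algebra_simps)
qed

lemma powr_lip1: fixes x y p :: real assumes p: "1 \<le> p" and xy: "y \<le> x" and y: "0 < y" and x: "x \<le> 1"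
  shows "\<bar>x powr p - y powr p\<bar> \<le> p * \<bar>x - y\<bar>"
proof -
  have "x powr p + p * x powr (p - 1) * (y - x) \<le> y powr p" by (rule powr_tangent, insert p xy y, auto)
  hence A: "x powr p - y powr p \<le> p * x powr (p - 1) * (x - y)" by (simp add: algebra_simps)
  have "p * x powr (p - 1) * (x - y) \<le> p * 1 * (x - y)"
    by (rule mult_right_mono, rule mult_left_mono, rule powr_le1, insert p xy y x, auto)
  with A have "x powr p - y powr p \<le> p * (x - y)" by simp
  moreover have "y powr p \<le> x powr p" by (rule powr_mono2, insert p xy y, auto)
  ultimately show ?thesis using xy by simp
qed

lemma powr_lip: fixes x y p :: real assumes p: "1 \<le> p" and "0 < x" "x \<le> 1" "0 < y" "y \<le> 1"
  shows "\<bar>x powr p - y powr p\<bar> \<le> p * \<bar>x - y\<bar>"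
proof (cases "y \<le> x")
  case True thus ?thesis using powr_lip1[OF p True] assms by auto
next
  case False
  hence "x \<le> y" by simp
  from powr_lip1[OF p this] assms show ?thesis by (simp add: abs_minus_commute)
qed

lemma lip_aux: "k * (M1 - A1 / 2 - B / 2) - k * (M2 - A2 / 2 - B / 2) = k * ((M1 - M2) - (A1 - A2) / 2)" for k M1 M2 A1 A2 B :: real
  by (simp add: field_simps)

lemma lip_scalar: fixes al be a1 a2 m1 m2 b t :: real
  assumes al: "1 < al" and be: "1 \<le> be"
    and r: "0 < a1" "a1 \<le> 1" "0 < a2" "a2 \<le> 1" "0 < m1" "m1 \<le> 1" "0 < m2" "m2 \<le> 1"
    and da: "\<bar>a1 - a2\<bar> \<le> al * t" and dm: "\<bar>m1 - m2\<bar> \<le> al / 2 * t"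
  shows "\<bar>1 / ((1 - al) * be) * (m1 powr be - a1 powr be / 2 - b powr be / 2) -
          1 / ((1 - al) * be) * (m2 powr be - a2 powr be / 2 - b powr be / 2)\<bar> \<le> al / (al - 1) * t"
proof -
  have kk: "\<bar>1 / ((1 - al) * be)\<bar> = 1 / ((al - 1) * be)" using al be by (simp add: abs_mult abs_divide)
  have "\<bar>(m1 powr be - m2 powr be) - (a1 powr be - a2 powr be) / 2\<bar> \<le> \<bar>m1 powr be - m2 powr be\<bar> + \<bar>a1 powr be - a2 powr be\<bar> / 2"
    using abs_triangle_ineq4[of "m1 powr be - m2 powr be" "(a1 powr be - a2 powr be) / 2"] by simp
  also have "\<dots> \<le> be * \<bar>m1 - m2\<bar> + be * \<bar>a1 - a2\<bar> / 2"
    using powr_lip[OF be r(5-8)] powr_lip[OF be r(1-4)] by simp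
  also have "\<dots> \<le> be * (al / 2 * t) + be * (al * t) / 2"
  proof -
    have h1: "be * \<bar>m1 - m2\<bar> \<le> be * (al / 2 * t)" by (rule mult_left_mono[OF dm], insert be, simp)
    have h2: "be * \<bar>a1 - a2\<bar> \<le> be * (al * t)" by (rule mult_left_mono[OF da], insert be, simp)
    from h1 h2 show ?thesis by linarith
  qed
  also have "\<dots> = be * (al * t)" by (simp add: field_simps)
  finally have X: "\<bar>(m1 powr be - m2 powr be) - (a1 powr be - a2 powr be) / 2\<bar> \<le> be * (al * t)" .
  have "1 / ((1 - al) * be) * (m1 powr be - a1 powr be / 2 - b powr be / 2) -
          1 / ((1 - al) * be) * (m2 powr be - a2 powr be / 2 - b powr be / 2) =
        1 / ((1 - al) * be) * ((m1 powr be - m2 powr be) - (a1 powr be - a2 powr be) / 2)"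
    by (rule lip_aux)
  hence "\<bar>1 / ((1 - al) * be) * (m1 powr be - a1 powr be / 2 - b powr be / 2) -
          1 / ((1 - al) * be) * (m2 powr be - a2 powr be / 2 - b powr be / 2)\<bar> =
        1 / ((al - 1) * be) * \<bar>(m1 powr be - m2 powr be) - (a1 powr be - a2 powr be) / 2\<bar>"
    by (simp only: abs_mult kk)
  also have "\<dots> \<le> 1 / ((al - 1) * be) * (be * (al * t))"
    by (rule mult_left_mono[OF X], insert al be, auto)
  also have "\<dots> = al / (al - 1) * t" using be by simp
  finally show ?thesis .
qed


theorem theorem1:
  fixes n m :: nat and \<rho> \<sigma> \<rho>1 \<rho>2 \<sigma>1 \<sigma>2 \<tau> U :: "complex mat"
    and \<alpha> \<beta> :: real
  assumes "density n \<rho>" "density n \<sigma>" "density n \<rho>1" "density n \<rho>2"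
    "density n \<sigma>1" "density n \<sigma>2" "density m \<tau>"
  shows
   "((0 < \<alpha> \<and> \<alpha> < 1 \<and> (\<beta> < 0 \<or> (0 < \<beta> \<and> \<beta> < 1))) \<or> (1 < \<alpha> \<and> 1 \<le> \<beta>)
        \<longrightarrow> 0 \<le> J_ab \<alpha> \<beta> \<rho> \<sigma>)
    \<and> (1 < \<alpha> \<and> 1 \<le> \<beta> \<longrightarrow>
        J_ab \<alpha> \<beta> \<rho> \<sigma> \<le> 1 / ((1 - \<alpha>) * \<beta>) * (2 powr (1 - \<alpha> * \<beta>) - 1))
    \<and> (0 < \<alpha> \<and> \<alpha> \<noteq> 1 \<and> \<beta> \<noteq> 0 \<longrightarrow>
        J_ab \<alpha> \<beta> (kron \<rho> \<tau>) (kron \<sigma> \<tau>)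
          = (1 + (1 - \<alpha>) * \<beta> * S_ab \<alpha> \<beta> \<tau>) * J_ab \<alpha> \<beta> \<rho> \<sigma>)
    \<and> (0 < \<alpha> \<and> \<alpha> \<noteq> 1 \<and> \<beta> \<noteq> 0 \<and> pure_state m \<tau> \<longrightarrow>
        J_ab \<alpha> \<beta> (kron \<rho> \<tau>) (kron \<sigma> \<tau>) = J_ab \<alpha> \<beta> \<rho> \<sigma>)
    \<and> (0 < \<alpha> \<and> \<alpha> \<noteq> 1 \<and> \<beta> \<noteq> 0 \<and> unitary n U \<longrightarrow>
        J_ab \<alpha> \<beta> (U * \<rho> * adj U) (U * \<sigma> * adj U) = J_ab \<alpha> \<beta> \<rho> \<sigma>)
    \<and> (0 < \<alpha> \<and> \<alpha> \<noteq> 1 \<and> \<beta> \<noteq> 0 \<longrightarrow> J_ab \<alpha> \<beta> \<rho> \<sigma> = J_ab \<alpha> \<beta> \<sigma> \<rho>)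
    \<and> (1 < \<alpha> \<and> 1 \<le> \<beta> \<longrightarrow>
        \<bar>J_ab \<alpha> \<beta> \<rho>1 \<sigma> - J_ab \<alpha> \<beta> \<rho>2 \<sigma>\<bar> \<le> \<alpha> / (\<alpha> - 1) * trace_norm (\<rho>1 - \<rho>2)
      \<and> \<bar>J_ab \<alpha> \<beta> \<rho> \<sigma>1 - J_ab \<alpha> \<beta> \<rho> \<sigma>2\<bar> \<le> \<alpha> / (\<alpha> - 1) * trace_norm (\<sigma>1 - \<sigma>2))"
proof -
  note r = assms(1) and s = assms(2) and r1 = assms(3) and r2 = assms(4)
    and s1 = assms(5) and s2 = assms(6) and t = assms(7)
  have rc: "\<rho> \<in> carrier_mat n n" and sc: "\<sigma> \<in> carrier_mat n n" and tc: "\<tau> \<in> carrier_mat m m"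
    using r s t unfolding density_def by auto
  note M = mix_density[OF r s]
  have P1: "((0 < \<alpha> \<and> \<alpha> < 1 \<and> (\<beta> < 0 \<or> (0 < \<beta> \<and> \<beta> < 1))) \<or> (1 < \<alpha> \<and> 1 \<le> \<beta>)
        \<longrightarrow> 0 \<le> J_ab \<alpha> \<beta> \<rho> \<sigma>)"
  proof (rule impI, erule disjE)
    assume H: "0 < \<alpha> \<and> \<alpha> < 1 \<and> (\<beta> < 0 \<or> 0 < \<beta> \<and> \<beta> < 1)"
    hence al: "0 < \<alpha>" "\<alpha> < 1" and be: "\<beta> < 0 \<or> 0 < \<beta> \<and> \<beta> < 1" by auto
    show "0 \<le> J_ab \<alpha> \<beta> \<rho> \<sigma>" unfolding J_alt
      by (rule lowerA[OF al be tr_pow_pos[OF r al(1)] tr_pow_pos[OF s al(1)] trpow_mid_concave[OF r s al(1)]],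
          insert al, auto)
  next
    assume "1 < \<alpha> \<and> 1 \<le> \<beta>"
    hence al: "1 < \<alpha>" and be: "1 \<le> \<beta>" by auto
    have a0: "0 < \<alpha>" using al by simp
    show "0 \<le> J_ab \<alpha> \<beta> \<rho> \<sigma>" unfolding J_alt
      by (rule lowerB[OF al be tr_pow_pos[OF r a0] tr_pow_pos[OF s a0] tr_pow_pos[OF M a0] trpow_mid_convex[OF r s]],
          insert al, auto)
  qed
  have P2: "1 < \<alpha> \<and> 1 \<le> \<beta> \<longrightarrow>
        J_ab \<alpha> \<beta> \<rho> \<sigma> \<le> 1 / ((1 - \<alpha>) * \<beta>) * (2 powr (1 - \<alpha> * \<beta>) - 1)"
  proof (intro impI, elim conjE)
    assume al: "1 < \<alpha>" and be: "1 \<le> \<beta>"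
    have a0: "0 < \<alpha>" and a1: "1 \<le> \<alpha>" using al by auto
    show "J_ab \<alpha> \<beta> \<rho> \<sigma> \<le> 1 / ((1 - \<alpha>) * \<beta>) * (2 powr (1 - \<alpha> * \<beta>) - 1)" unfolding J_alt
      by (rule upperB[OF al be tr_pow_pos[OF r a0] tr_pow_le1[OF r a1] tr_pow_pos[OF s a0] tr_pow_le1[OF s a1] trpow_super[OF r s a1]])
  qed
  have P3: "0 < \<alpha> \<and> \<alpha> \<noteq> 1 \<and> \<beta> \<noteq> 0 \<longrightarrow>
        J_ab \<alpha> \<beta> (kron \<rho> \<tau>) (kron \<sigma> \<tau>) = (1 + (1 - \<alpha>) * \<beta> * S_ab \<alpha> \<beta> \<tau>) * J_ab \<alpha> \<beta> \<rho> \<sigma>"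
  proof (intro impI, elim conjE)
    assume a0: "0 < \<alpha>" and a1: "\<alpha> \<noteq> 1" and b0: "\<beta> \<noteq> 0"
    have c: "(1 - \<alpha>) * \<beta> \<noteq> 0" using a1 b0 by simp
    have "J_ab \<alpha> \<beta> (kron \<rho> \<tau>) (kron \<sigma> \<tau>) = 1 / ((1 - \<alpha>) * \<beta>) *
        ((tr_pow (mix \<rho> \<sigma>) \<alpha> * tr_pow \<tau> \<alpha>) powr \<beta> - (tr_pow \<rho> \<alpha> * tr_pow \<tau> \<alpha>) powr \<beta> / 2 - (tr_pow \<sigma> \<alpha> * tr_pow \<tau> \<alpha>) powr \<beta> / 2)"
      unfolding J_alt mix_kron[OF rc sc tc] tr_pow_kron[OF M t a0] tr_pow_kron[OF r t a0] tr_pow_kron[OF s t a0] ..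
    also have "\<dots> = (1 + (1 - \<alpha>) * \<beta> * S_ab \<alpha> \<beta> \<tau>) * J_ab \<alpha> \<beta> \<rho> \<sigma>"
      unfolding J_alt S_ab_def
      by (rule tensor_scalar[OF c], insert tr_pow_pos[OF M a0] tr_pow_pos[OF r a0] tr_pow_pos[OF s a0] tr_pow_pos[OF t a0], auto)
    finally show "J_ab \<alpha> \<beta> (kron \<rho> \<tau>) (kron \<sigma> \<tau>) = (1 + (1 - \<alpha>) * \<beta> * S_ab \<alpha> \<beta> \<tau>) * J_ab \<alpha> \<beta> \<rho> \<sigma>" .
  qed
  have P4: "0 < \<alpha> \<and> \<alpha> \<noteq> 1 \<and> \<beta> \<noteq> 0 \<and> pure_state m \<tau> \<longrightarrow>
        J_ab \<alpha> \<beta> (kron \<rho> \<tau>) (kron \<sigma> \<tau>) = J_ab \<alpha> \<beta> \<rho> \<sigma>"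
  proof (intro impI, elim conjE)
    assume a0: "0 < \<alpha>" and a1: "\<alpha> \<noteq> 1" and b0: "\<beta> \<noteq> 0" and p: "pure_state m \<tau>"
    have "S_ab \<alpha> \<beta> \<tau> = 0" unfolding S_ab_def tr_pow_pure[OF p t a0] by simp
    thus "J_ab \<alpha> \<beta> (kron \<rho> \<tau>) (kron \<sigma> \<tau>) = J_ab \<alpha> \<beta> \<rho> \<sigma>" using P3 a0 a1 b0 by simp
  qed
  have P5: "0 < \<alpha> \<and> \<alpha> \<noteq> 1 \<and> \<beta> \<noteq> 0 \<and> unitary n U \<longrightarrow>
        J_ab \<alpha> \<beta> (U * \<rho> * adj U) (U * \<sigma> * adj U) = J_ab \<alpha> \<beta> \<rho> \<sigma>"
  proof (intro impI, elim conjE)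
    assume U: "unitary n U"
    show "J_ab \<alpha> \<beta> (U * \<rho> * adj U) (U * \<sigma> * adj U) = J_ab \<alpha> \<beta> \<rho> \<sigma>" unfolding J_alt mix_unitary[OF rc sc U] tr_pow_unitary[OF M U] tr_pow_unitary[OF r U]
      tr_pow_unitary[OF s U] ..
  qed
  have sym: "\<And>x y. density n x \<Longrightarrow> density n y \<Longrightarrow> J_ab \<alpha> \<beta> x y = J_ab \<alpha> \<beta> y x"
  proof -
    fix x y assume x: "density n x" and y: "density n y"
    have "mix x y = mix y x" by (rule mix_comm, insert x y, auto simp: density_def)
    thus "J_ab \<alpha> \<beta> x y = J_ab \<alpha> \<beta> y x" unfolding J_alt by simp
  qed
  have P6: "0 < \<alpha> \<and> \<alpha> \<noteq> 1 \<and> \<beta> \<noteq> 0 \<longrightarrow> J_ab \<alpha> \<beta> \<rho> \<sigma> = J_ab \<alpha> \<beta> \<sigma> \<rho>"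
    using sym[OF r s] by simp
  have lip: "\<And>x1 x2 y. density n x1 \<Longrightarrow> density n x2 \<Longrightarrow> density n y \<Longrightarrow> 1 < \<alpha> \<Longrightarrow> 1 \<le> \<beta> \<Longrightarrow>
      \<bar>J_ab \<alpha> \<beta> x1 y - J_ab \<alpha> \<beta> x2 y\<bar> \<le> \<alpha> / (\<alpha> - 1) * trace_norm (x1 - x2)"
  proof -
    fix x1 x2 y assume x1: "density n x1" and x2: "density n x2" and y: "density n y" and al: "1 < \<alpha>" and be: "1 \<le> \<beta>"
    have a0: "0 < \<alpha>" and a1: "1 \<le> \<alpha>" using al by auto
    note M1 = mix_density[OF x1 y] and M2 = mix_density[OF x2 y]
    show "\<bar>J_ab \<alpha> \<beta> x1 y - J_ab \<alpha> \<beta> x2 y\<bar> \<le> \<alpha> / (\<alpha> - 1) * trace_norm (x1 - x2)"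
      unfolding J_alt
      by (rule lip_scalar[OF al be tr_pow_pos[OF x1 a0] tr_pow_le1[OF x1 a1] tr_pow_pos[OF x2 a0] tr_pow_le1[OF x2 a1]
          tr_pow_pos[OF M1 a0] tr_pow_le1[OF M1 a1] tr_pow_pos[OF M2 a0] tr_pow_le1[OF M2 a1]
          trpow_lip(1)[OF x1 x2 y a1] trpow_lip(2)[OF x1 x2 y a1]])
  qed
  have P7: "1 < \<alpha> \<and> 1 \<le> \<beta> \<longrightarrow>
        \<bar>J_ab \<alpha> \<beta> \<rho>1 \<sigma> - J_ab \<alpha> \<beta> \<rho>2 \<sigma>\<bar> \<le> \<alpha> / (\<alpha> - 1) * trace_norm (\<rho>1 - \<rho>2)
      \<and> \<bar>J_ab \<alpha> \<beta> \<rho> \<sigma>1 - J_ab \<alpha> \<beta> \<rho> \<sigma>2\<bar> \<le> \<alpha> / (\<alpha> - 1) * trace_norm (\<sigma>1 - \<sigma>2)"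
  proof (intro impI conjI, elim conjE)
    assume al: "1 < \<alpha>" and be: "1 \<le> \<beta>"
    show "\<bar>J_ab \<alpha> \<beta> \<rho>1 \<sigma> - J_ab \<alpha> \<beta> \<rho>2 \<sigma>\<bar> \<le> \<alpha> / (\<alpha> - 1) * trace_norm (\<rho>1 - \<rho>2)"
      by (rule lip[OF r1 r2 s al be])
  next
    assume "1 < \<alpha> \<and> 1 \<le> \<beta>"
    hence al: "1 < \<alpha>" and be: "1 \<le> \<beta>" by auto
    show "\<bar>J_ab \<alpha> \<beta> \<rho> \<sigma>1 - J_ab \<alpha> \<beta> \<rho> \<sigma>2\<bar> \<le> \<alpha> / (\<alpha> - 1) * trace_norm (\<sigma>1 - \<sigma>2)"
      unfolding sym[OF r s1] sym[OF r s2] by (rule lip[OF s1 s2 r al be])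
  qed
  show ?thesis using P1 P2 P3 P4 P5 P6 P7 by blast
qed


end
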